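(* Let $L$ be a semiprime right Leibniz algebra and let $Q(L)$ be the Leibniz algebra of equivalence classes of partial derivations on essential ideals described in the context, with $L$ embedded via $\varphi(x)=(R_x)_L$. Then $Q(L)$ is semiprime and is an algebra of quotients of $L$ (i.e., of $\varphi(L)$). Moreover, $Q(L)$ is maximal among the algebras of quotients of $L$: if $S$ is an algebra of quotients of $L$, then the map $\psi:S\to Q(L)$, $s\mapsto (R_s)_{(L:s)}$ (where $R_s(x)=[x,s]$ for $x\in(L:s)$) is a monomorphism which is the identity when restricted to $L$ (i.e., $\psi(x)=\varphi(x)$ for $x\in L$).
   Context: A right Leibniz algebra satisfies $[x,[y,z]]=[[x,y],z]-[[x,z],y]$. Ideals are subspaces $I$ with $[I,L]\subseteq I$, $[L,I]\subseteq I$; $I^2$ is the span of $[x,y]$, $x,y\in I$. $L$ is semiprime if $[I,I]\ne\{0\}$ for every nonzero ideal $I$. An ideal is essential if it meets every nonzero ideal nontrivially; $\mathscr{J}_e(L)$ denotes the set of essential ideals. $\mathrm{PDer}(I,L)$ is the set of linear maps $\delta:I\to L$ with $\delta([x,y])=[\delta(x),y]+[x,\delta(y)]$. $Q(L)$ is the set of pairs $(\delta,I)$, $I\in\mathscr{J}_e(L)$, $\delta\in\mathrm{PDer}(I,L)$, modulo $(\delta,I)\equiv(\mu,J)$ iff $\delta,\mu$ agree on some $K\in\mathscr{J}_e(L)$ with $K\subseteq I\cap J$; the class is written $\delta_I$, with operations $p\delta_I=(p\delta)_I$, $(p\delta)(y)=\delta(py)$, $\delta_I+\mu_J=(\delta+\mu)_{I\cap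 J}$, $[\delta_I,\mu_J]=[\delta,\mu]_{(I\cap J)^2}$ with $[\delta,\mu](x)=\mu\delta(x)-\delta\mu(x)$; $\varphi(x)=(R_x)_L$ with $R_x(y)=[y,x]$. For a Leibniz algebra $S$ containing $L$ as subalgebra and $s\in S$: for $x\in L$ let $R_x,L_x$ act on $S$ by $R_x(u)=[u,x]$, $L_x(u)=[x,u]$, $\mathscr{A}(L)$ the associative algebra generated by them, ${}_L(s)=\mathbb{F}s+\{\sum\xi_i(s):\xi_i\in\mathscr{A}(L)\}$, $(L:s)=\{x\in L:[x,{}_L(s)]\subseteq L,[{}_L(s),x]\subseteq L\}$. $S$ is an algebra of quotients of $L$ if for all $p,q\in S$, $p\ne0$, there is $x\in(L:q)$ with $[x,p]\ne0$ or $y\in(L:q)$ with $[p,y]\ne0$. *)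

theory Defs
  imports Main
begin

record ('f, 'a) lalg =
  lcar  :: "'a set"
  ladd  :: "'a \<Rightarrow> 'a \<Rightarrow> 'a"
  lzero :: "'a"
  lsmul :: "'f \<Rightarrow> 'a \<Rightarrow> 'a"
  lbr   :: "'a \<Rightarrow> 'a \<Rightarrow> 'a"

definition lsub :: "('f::field, 'a) lalg \<Rightarrow> 'a \<Rightarrow> 'a \<Rightarrow> 'a" where
  "lsub A x y = ladd A x (lsmul A (-1) y)"

definition vspace :: "('f::field, 'a) lalg \<Rightarrow> bool" where
  "vspace A \<longleftrightarrow>
     lzero A \<in> lcar A \<and>
     (\<forall>x\<in>lcar A. \<forall>y\<in>lcar A. ladd A x y \<in> lcar A) \<and>
     (\<forall>c. \<forall>x\<in>lcar A. lsmul A c x \<in> lcar A) \<and>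
     (\<forall>x\<in>lcar A. \<forall>y\<in>lcar A. \<forall>z\<in>lcar A. ladd A (ladd A x y) z = ladd A x (ladd A y z)) \<and>
     (\<forall>x\<in>lcar A. \<forall>y\<in>lcar A. ladd A x y = ladd A y x) \<and>
     (\<forall>x\<in>lcar A. ladd A (lzero A) x = x) \<and>
     (\<forall>x\<in>lcar A. ladd A x (lsmul A (-1) x) = lzero A) \<and>
     (\<forall>x\<in>lcar A. lsmul A 1 x = x) \<and>
     (\<forall>a b. \<forall>x\<in>lcar A. lsmul A (a * b) x = lsmul A a (lsmul A b x)) \<and>
     (\<forall>a b. \<forall>x\<in>lcar A. lsmul A (a + b) x = ladd A (lsmul A a x) (lsmul A b x)) \<and>
     (\<forall>a. \<forall>x\<in>lcar A. \<forall>y\<in>lcar A. lsmul A a (ladd A x y) = ladd A (lsmul A a x) (lsmul A a y))"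

definition leibniz :: "('f::field, 'a) lalg \<Rightarrow> bool" where
  "leibniz A \<longleftrightarrow> vspace A \<and>
     (\<forall>x\<in>lcar A. \<forall>y\<in>lcar A. lbr A x y \<in> lcar A) \<and>
     (\<forall>x\<in>lcar A. \<forall>y\<in>lcar A. \<forall>z\<in>lcar A.
        lbr A (ladd A x y) z = ladd A (lbr A x z) (lbr A y z) \<and>
        lbr A x (ladd A y z) = ladd A (lbr A x y) (lbr A x z)) \<and>
     (\<forall>c. \<forall>x\<in>lcar A. \<forall>y\<in>lcar A.
        lbr A (lsmul A c x) y = lsmul A c (lbr A x y) \<and>
        lbr A x (lsmul A c y) = lsmul A c (lbr A x y)) \<and>
     (\<forall>x\<in>lcar A. \<forall>y\<in>lcar A. \<forall>z\<in>lcar A.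
        lbr A x (lbr A y z) = lsub A (lbr A (lbr A x y) z) (lbr A (lbr A x z) y))"

definition subspace :: "('f::field, 'a) lalg \<Rightarrow> 'a set \<Rightarrow> bool" where
  "subspace A V \<longleftrightarrow> V \<subseteq> lcar A \<and> lzero A \<in> V \<and>
     (\<forall>x\<in>V. \<forall>y\<in>V. ladd A x y \<in> V) \<and> (\<forall>c. \<forall>x\<in>V. lsmul A c x \<in> V)"

definition subalgebra :: "('f::field, 'a) lalg \<Rightarrow> 'a set \<Rightarrow> bool" where
  "subalgebra A V \<longleftrightarrow> subspace A V \<and> (\<forall>x\<in>V. \<forall>y\<in>V. lbr A x y \<in> V)"

definition ideal :: "('f::field, 'a) lalg \<Rightarrow> 'a set \<Rightarrow> bool" where
  "ideal A I \<longleftrightarrow> subspace A I \<and>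
     (\<forall>x\<in>I. \<forall>y\<in>lcar A. lbr A x y \<in> I \<and> lbr A y x \<in> I)"

definition lspan :: "('f::field, 'a) lalg \<Rightarrow> 'a set \<Rightarrow> 'a set" where
  "lspan A X = \<Inter>{V. subspace A V \<and> X \<subseteq> V}"

definition isq :: "('f::field, 'a) lalg \<Rightarrow> 'a set \<Rightarrow> 'a set" where
  "isq A I = lspan A {lbr A x y | x y. x \<in> I \<and> y \<in> I}"

definition semiprime :: "('f::field, 'a) lalg \<Rightarrow> bool" where
  "semiprime A \<longleftrightarrow> (\<forall>I. ideal A I \<and> I \<noteq> {lzero A} \<longrightarrow>
      {lbr A x y | x y. x \<in> I \<and> y \<in> I} \<noteq> {lzero A})"

definition essential :: "('f::field, 'a) lalg \<Rightarrow> 'a set \<Rightarrow> bool" where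
  "essential A I \<longleftrightarrow> ideal A I \<and>
     (\<forall>J. ideal A J \<and> J \<noteq> {lzero A} \<longrightarrow> I \<inter> J \<noteq> {lzero A})"

text \<open>Partial derivations I \<rightarrow> L (only the values on I matter).\<close>

definition PDer :: "('f::field, 'a) lalg \<Rightarrow> 'a set \<Rightarrow> ('a \<Rightarrow> 'a) \<Rightarrow> bool" where
  "PDer A I d \<longleftrightarrow>
     (\<forall>x\<in>I. d x \<in> lcar A) \<and>
     (\<forall>x\<in>I. \<forall>y\<in>I. d (ladd A x y) = ladd A (d x) (d y)) \<and>
     (\<forall>c. \<forall>x\<in>I. d (lsmul A c x) = lsmul A c (d x)) \<and>
     (\<forall>x\<in>I. \<forall>y\<in>I. d (lbr A x y) = ladd A (lbr A (d x) y) (lbr A x (d y)))"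

definition Qpairs :: "('f::field, 'a) lalg \<Rightarrow> (('a \<Rightarrow> 'a) \<times> 'a set) set" where
  "Qpairs A = {(d, I). essential A I \<and> PDer A I d}"

definition Qrel :: "('f::field, 'a) lalg \<Rightarrow> ((('a \<Rightarrow> 'a) \<times> 'a set) \<times> (('a \<Rightarrow> 'a) \<times> 'a set)) set" where
  "Qrel A = {((d, I), (m, J)). (d, I) \<in> Qpairs A \<and> (m, J) \<in> Qpairs A \<and>
      (\<exists>K. essential A K \<and> K \<subseteq> I \<inter> J \<and> (\<forall>x\<in>K. d x = m x))}"

definition qclass :: "('f::field, 'a) lalg \<Rightarrow> ('a \<Rightarrow> 'a) \<Rightarrow> 'a set \<Rightarrow> (('a \<Rightarrow> 'a) \<times> 'a set) set" where
  "qclass A d I = Qrel A `` {(d, I)}"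

definition qrep :: "(('a \<Rightarrow> 'a) \<times> 'a set) set \<Rightarrow> ('a \<Rightarrow> 'a) \<times> 'a set" where
  "qrep q = (SOME p. p \<in> q)"

definition qadd :: "('f::field, 'a) lalg \<Rightarrow> _ \<Rightarrow> _ \<Rightarrow> _" where
  "qadd A q r = (case qrep q of (d, I) \<Rightarrow> case qrep r of (m, J) \<Rightarrow>
      qclass A (\<lambda>x. ladd A (d x) (m x)) (I \<inter> J))"

definition qsmul :: "('f::field, 'a) lalg \<Rightarrow> 'f \<Rightarrow> _ \<Rightarrow> _" where
  "qsmul A c q = (case qrep q of (d, I) \<Rightarrow> qclass A (\<lambda>y. d (lsmul A c y)) I)"

definition qzero :: "('f::field, 'a) lalg \<Rightarrow> _" where
  "qzero A = qclass A (\<lambda>x. lzero A) (lcar A)"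

definition qbr :: "('f::field, 'a) lalg \<Rightarrow> _ \<Rightarrow> _ \<Rightarrow> _" where
  "qbr A q r = (case qrep q of (d, I) \<Rightarrow> case qrep r of (m, J) \<Rightarrow>
      qclass A (\<lambda>x. lsub A (m (d x)) (d (m x))) (isq A (I \<inter> J)))"

definition Qalg :: "('f::field, 'a) lalg \<Rightarrow> ('f, (('a \<Rightarrow> 'a) \<times> 'a set) set) lalg" where
  "Qalg A = \<lparr> lcar = Qpairs A // Qrel A, ladd = qadd A, lzero = qzero A,
              lsmul = qsmul A, lbr = qbr A \<rparr>"

definition phi :: "('f::field, 'a) lalg \<Rightarrow> 'a \<Rightarrow> (('a \<Rightarrow> 'a) \<times> 'a set) set" where
  "phi A x = qclass A (\<lambda>y. lbr A y x) (lcar A)"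

inductive_set assoc_gen :: "('f::field, 's) lalg \<Rightarrow> 's set \<Rightarrow> ('s \<Rightarrow> 's) set"
  for S :: "('f, 's) lalg" and Lsub :: "'s set" where
  gen_R: "x \<in> Lsub \<Longrightarrow> (\<lambda>u. lbr S u x) \<in> assoc_gen S Lsub"
| gen_L: "x \<in> Lsub \<Longrightarrow> (\<lambda>u. lbr S x u) \<in> assoc_gen S Lsub"
| gen_add: "f \<in> assoc_gen S Lsub \<Longrightarrow> g \<in> assoc_gen S Lsub \<Longrightarrow>
            (\<lambda>u. ladd S (f u) (g u)) \<in> assoc_gen S Lsub"
| gen_smul: "f \<in> assoc_gen S Lsub \<Longrightarrow> (\<lambda>u. lsmul S c (f u)) \<in> assoc_gen S Lsub"
| gen_comp: "f \<in> assoc_gen S Lsub \<Longrightarrow> g \<in> assoc_gen S Lsub \<Longrightarrow> f \<circ> g \<in> assoc_gen S Lsub"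

text \<open>_L(s) = F s + { \<Sum> xi_i(s) }  (sums of the xi_i lie again in the algebra).\<close>

definition gen_sub :: "('f::field, 's) lalg \<Rightarrow> 's set \<Rightarrow> 's \<Rightarrow> 's set" where
  "gen_sub S Lsub s = {ladd S (lsmul S c s) (xi s) | c xi. xi \<in> assoc_gen S Lsub}"

definition colon :: "('f::field, 's) lalg \<Rightarrow> 's set \<Rightarrow> 's \<Rightarrow> 's set" where
  "colon S Lsub s = {x \<in> Lsub. \<forall>u\<in>gen_sub S Lsub s. lbr S x u \<in> Lsub \<and> lbr S u x \<in> Lsub}"

definition alg_of_quotients :: "('f::field, 's) lalg \<Rightarrow> 's set \<Rightarrow> bool" where
  "alg_of_quotients S Lsub \<longleftrightarrow> leibniz S \<and> subalgebra S Lsub \<and>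
     (\<forall>p\<in>lcar S. \<forall>q\<in>lcar S. p \<noteq> lzero S \<longrightarrow>
        (\<exists>x\<in>colon S Lsub q. lbr S x p \<noteq> lzero S) \<or>
        (\<exists>y\<in>colon S Lsub q. lbr S p y \<noteq> lzero S))"

definition lhom :: "('f::field, 'a) lalg \<Rightarrow> ('f, 'b) lalg \<Rightarrow> ('a \<Rightarrow> 'b) \<Rightarrow> bool" where
  "lhom A B f \<longleftrightarrow> (\<forall>x\<in>lcar A. f x \<in> lcar B) \<and>
     (\<forall>x\<in>lcar A. \<forall>y\<in>lcar A. f (ladd A x y) = ladd B (f x) (f y)) \<and>
     (\<forall>c. \<forall>x\<in>lcar A. f (lsmul A c x) = lsmul B c (f x)) \<and>
     (\<forall>x\<in>lcar A. \<forall>y\<in>lcar A. f (lbr A x y) = lbr B (f x) (f y))"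

definition lmono :: "('f::field, 'a) lalg \<Rightarrow> ('f, 'b) lalg \<Rightarrow> ('a \<Rightarrow> 'b) \<Rightarrow> bool" where
  "lmono A B f \<longleftrightarrow> lhom A B f \<and> inj_on f (lcar A)"

definition psi :: "('f::field, 'a) lalg \<Rightarrow> ('f, 's) lalg \<Rightarrow> ('a \<Rightarrow> 's) \<Rightarrow> 's
                   \<Rightarrow> (('a \<Rightarrow> 'a) \<times> 'a set) set" where
  "psi A S emb s = qclass A (\<lambda>x. inv_into (lcar A) emb (lbr S (emb x) s))
      {x \<in> lcar A. emb x \<in> colon S (emb ` lcar A) s}"

end

theory Submission
  imports Defs
begin

locale leib =
  fixes A :: "('f::field, 'a) lalg"
  assumes leib: "leibniz A"
begin

abbreviation C where "C \<equiv> lcar A"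
abbreviation pl (infixl "\<oplus>" 65) where "x \<oplus> y \<equiv> ladd A x y"
abbreviation sm (infixr "\<odot>" 75) where "c \<odot> x \<equiv> lsmul A c x"
abbreviation mi (infixl "\<ominus>" 65) where "x \<ominus> y \<equiv> lsub A x y"
abbreviation bb (infixl "\<star>" 70) where "x \<star> y \<equiv> lbr A x y"
abbreviation ze ("\<zero>") where "\<zero> \<equiv> lzero A"
abbreviation ng where "ng x \<equiv> lsmul A (-1) x"

lemma vs: "vspace A" using leib unfolding leibniz_def by auto

lemma zero_closed[simp]: "\<zero> \<in> C" using vs unfolding vspace_def by auto
lemma add_closed[simp]: "x \<in> C \<Longrightarrow> y \<in> C \<Longrightarrow> x \<oplus> y \<in> C" using vs unfolding vspace_def by auto
lemma smul_closed[simp]: "x \<in> C \<Longrightarrow> c \<odot> x \<in> C" using vs unfolding vspace_def by auto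
lemma br_closed[simp]: "x \<in> C \<Longrightarrow> y \<in> C \<Longrightarrow> x \<star> y \<in> C" using leib unfolding leibniz_def by auto
lemma sub_closed[simp]: "x \<in> C \<Longrightarrow> y \<in> C \<Longrightarrow> x \<ominus> y \<in> C" by (simp add: lsub_def)

lemma add_assoc: "x \<in> C \<Longrightarrow> y \<in> C \<Longrightarrow> z \<in> C \<Longrightarrow> x \<oplus> y \<oplus> z = x \<oplus> (y \<oplus> z)"
  using vs unfolding vspace_def by auto
lemma add_comm: "x \<in> C \<Longrightarrow> y \<in> C \<Longrightarrow> x \<oplus> y = y \<oplus> x"
  using vs unfolding vspace_def by auto
lemma add_lcomm: "x \<in> C \<Longrightarrow> y \<in> C \<Longrightarrow> z \<in> C \<Longrightarrow> x \<oplus> (y \<oplus> z) = y \<oplus> (x \<oplus> z)"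
  by (metis add_assoc add_comm)
lemmas add_ac = add_assoc add_comm add_lcomm

lemma zero_l[simp]: "x \<in> C \<Longrightarrow> \<zero> \<oplus> x = x" using vs unfolding vspace_def by auto
lemma zero_r[simp]: "x \<in> C \<Longrightarrow> x \<oplus> \<zero> = x" by (metis zero_l add_comm zero_closed)
lemma neg_r[simp]: "x \<in> C \<Longrightarrow> x \<oplus> ng x = \<zero>" using vs unfolding vspace_def by auto
lemma neg_l[simp]: "x \<in> C \<Longrightarrow> ng x \<oplus> x = \<zero>" by (metis neg_r add_comm smul_closed)
lemma smul_one[simp]: "x \<in> C \<Longrightarrow> 1 \<odot> x = x" using vs unfolding vspace_def by auto
lemma smul_assoc: "x \<in> C \<Longrightarrow> a \<odot> b \<odot> x = (a * b) \<odot> x" using vs unfolding vspace_def by auto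
lemma smul_ldist: "x \<in> C \<Longrightarrow> (a + b) \<odot> x = a \<odot> x \<oplus> b \<odot> x" using vs unfolding vspace_def by auto
lemma smul_rdist: "x \<in> C \<Longrightarrow> y \<in> C \<Longrightarrow> a \<odot> (x \<oplus> y) = a \<odot> x \<oplus> a \<odot> y"
  using vs unfolding vspace_def by auto

lemma add_left_neg[simp]: "x \<in> C \<Longrightarrow> y \<in> C \<Longrightarrow> x \<oplus> (ng x \<oplus> y) = y"
  by (simp flip: add_assoc)
lemma add_left_neg2[simp]: "x \<in> C \<Longrightarrow> y \<in> C \<Longrightarrow> ng x \<oplus> (x \<oplus> y) = y"
  by (simp flip: add_assoc)

lemma add_cancel_l: assumes "a \<in> C" "b \<in> C" "c \<in> C" "a \<oplus> b = a \<oplus> c" shows "b = c"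
proof -
  have "b = ng a \<oplus> (a \<oplus> b)" using assms(1,2) by simp
  also have "\<dots> = ng a \<oplus> (a \<oplus> c)" using assms(4) by simp
  also have "\<dots> = c" using assms(1,3) by simp
  finally show ?thesis .
qed
lemma add_cancel_r: assumes "a \<in> C" "b \<in> C" "c \<in> C" "b \<oplus> a = c \<oplus> a" shows "b = c"
  using add_cancel_l[of a b c] assms by (simp add: add_comm)

lemma smul_zero_l[simp]: assumes "x \<in> C" shows "0 \<odot> x = \<zero>"
proof -
  have "0 \<odot> x \<oplus> 0 \<odot> x = 0 \<odot> x \<oplus> \<zero>" using assms by (simp flip: smul_ldist)
  thus ?thesis using add_cancel_l assms by (metis smul_closed zero_closed)
qed
lemma smul_zero_r[simp]: "c \<odot> \<zero> = \<zero>"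
proof -
  have "c \<odot> \<zero> = c \<odot> (0 \<odot> \<zero>)" by simp
  also have "\<dots> = (c * 0) \<odot> \<zero>" by (simp only: smul_assoc zero_closed)
  finally show ?thesis by simp
qed

lemma neg_zero[simp]: "ng \<zero> = \<zero>" by simp

lemma neg_neg[simp]: "x \<in> C \<Longrightarrow> ng (ng x) = x" by (simp add: smul_assoc)
lemma neg_add: "x \<in> C \<Longrightarrow> y \<in> C \<Longrightarrow> ng (x \<oplus> y) = ng x \<oplus> ng y" by (simp add: smul_rdist)

lemma sub_def': "x \<ominus> y = x \<oplus> ng y" by (simp add: lsub_def)

lemma eq_sub_iff: assumes "a \<in> C" "b \<in> C" "c \<in> C" shows "(a = b \<ominus> c) = (a \<oplus> c = b)"
proof
  assume "a = b \<ominus> c"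
  hence "a \<oplus> c = b \<oplus> (ng c \<oplus> c)" using assms by (simp add: sub_def' add_assoc)
  thus "a \<oplus> c = b" using assms by simp
next
  assume h: "a \<oplus> c = b"
  have "b \<ominus> c = a \<oplus> (c \<oplus> ng c)" using assms h[symmetric] by (simp add: sub_def' add_assoc)
  thus "a = b \<ominus> c" using assms by simp
qed

lemma sub_eq_sub_iff: "a \<in> C \<Longrightarrow> b \<in> C \<Longrightarrow> c \<in> C \<Longrightarrow> d \<in> C \<Longrightarrow>
   (a \<ominus> b = c \<ominus> d) = (a \<oplus> d = c \<oplus> b)"
proof -
  assume h: "a \<in> C" "b \<in> C" "c \<in> C" "d \<in> C"
  have "(a \<ominus> b = c \<ominus> d) = (a \<ominus> b \<oplus> d = c)" using h eq_sub_iff by (metis sub_closed)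
  also have "\<dots> = (a \<oplus> d \<ominus> b = c)" using h by (simp add: sub_def' add_ac)
  also have "\<dots> = (c = a \<oplus> d \<ominus> b)" by auto
  also have "\<dots> = (c \<oplus> b = a \<oplus> d)" using h eq_sub_iff by simp
  finally show ?thesis by auto
qed

lemma sub_self[simp]: "x \<in> C \<Longrightarrow> x \<ominus> x = \<zero>" by (simp add: sub_def')
lemma sub_zero_r[simp]: "x \<in> C \<Longrightarrow> x \<ominus> \<zero> = x" by (simp add: sub_def')
lemma sub_eq0: "x \<in> C \<Longrightarrow> y \<in> C \<Longrightarrow> x \<ominus> y = \<zero> \<Longrightarrow> x = y"
  using eq_sub_iff[of "\<zero>" x y] by simp
lemma sum_zero_neg: "x \<in> C \<Longrightarrow> y \<in> C \<Longrightarrow> x \<oplus> y = \<zero> \<Longrightarrow> x = ng y"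
  by (metis add_cancel_r neg_l smul_closed)

lemma br_addl: "x \<in> C \<Longrightarrow> y \<in> C \<Longrightarrow> z \<in> C \<Longrightarrow> (x \<oplus> y) \<star> z = x \<star> z \<oplus> y \<star> z"
  using leib unfolding leibniz_def by auto
lemma br_addr: "x \<in> C \<Longrightarrow> y \<in> C \<Longrightarrow> z \<in> C \<Longrightarrow> x \<star> (y \<oplus> z) = x \<star> y \<oplus> x \<star> z"
  using leib unfolding leibniz_def by auto
lemma br_smull: "x \<in> C \<Longrightarrow> y \<in> C \<Longrightarrow> (c \<odot> x) \<star> y = c \<odot> (x \<star> y)"
  using leib unfolding leibniz_def by auto
lemma br_smulr: "x \<in> C \<Longrightarrow> y \<in> C \<Longrightarrow> x \<star> (c \<odot> y) = c \<odot> (x \<star> y)"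
  using leib unfolding leibniz_def by auto
lemma jac: "x \<in> C \<Longrightarrow> y \<in> C \<Longrightarrow> z \<in> C \<Longrightarrow> x \<star> (y \<star> z) = (x \<star> y) \<star> z \<ominus> (x \<star> z) \<star> y"
  using leib unfolding leibniz_def by auto
lemma jac2: "x \<in> C \<Longrightarrow> y \<in> C \<Longrightarrow> z \<in> C \<Longrightarrow> (x \<star> y) \<star> z = x \<star> (y \<star> z) \<oplus> (x \<star> z) \<star> y"
  using jac eq_sub_iff by (metis br_closed)

lemma br_zero_l[simp]: "x \<in> C \<Longrightarrow> \<zero> \<star> x = \<zero>"
  by (metis br_smull smul_zero_l zero_closed br_closed)
lemma br_zero_r[simp]: "x \<in> C \<Longrightarrow> x \<star> \<zero> = \<zero>"
  by (metis br_smulr smul_zero_l zero_closed br_closed)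
lemma br_subl: "x \<in> C \<Longrightarrow> y \<in> C \<Longrightarrow> z \<in> C \<Longrightarrow> (x \<ominus> y) \<star> z = x \<star> z \<ominus> y \<star> z"
  by (simp add: sub_def' br_addl br_smull)
lemma br_subr: "x \<in> C \<Longrightarrow> y \<in> C \<Longrightarrow> z \<in> C \<Longrightarrow> x \<star> (y \<ominus> z) = x \<star> y \<ominus> x \<star> z"
  by (simp add: sub_def' br_addr br_smulr)

lemma anti_left: assumes "x \<in> C" "y \<in> C" "z \<in> C" shows "x \<star> (y \<star> z) \<oplus> x \<star> (z \<star> y) = \<zero>"
proof -
  have "x \<star> (y \<star> z) \<oplus> x \<star> (z \<star> y) = ((x \<star> y) \<star> z \<ominus> (x \<star> z) \<star> y) \<oplus> ((x \<star> z) \<star> y \<ominus> (x \<star> y) \<star> z)"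
    using assms by (simp add: jac)
  also have "\<dots> = \<zero>" using assms by (simp add: sub_def' add_ac)
  finally show ?thesis .
qed
lemma br_sq_left: "x \<in> C \<Longrightarrow> y \<in> C \<Longrightarrow> x \<star> (y \<star> y) = \<zero>"
  using jac[of x y y] by simp

lemma subspaceD: assumes "subspace A V"
  shows "V \<subseteq> C" "\<zero> \<in> V" "x \<in> V \<Longrightarrow> y \<in> V \<Longrightarrow> x \<oplus> y \<in> V" "x \<in> V \<Longrightarrow> c \<odot> x \<in> V"
  using assms unfolding subspace_def by auto
lemma subspace_sub: "subspace A V \<Longrightarrow> x \<in> V \<Longrightarrow> y \<in> V \<Longrightarrow> x \<ominus> y \<in> V"
  by (simp add: sub_def' subspaceD)

lemma idealD: assumes "ideal A I"
  shows "subspace A I" "I \<subseteq> C" "\<zero> \<in> I" "x \<in> I \<Longrightarrow> y \<in> I \<Longrightarrow> x \<oplus> y \<in> I" "x \<in> I \<Longrightarrow> c \<odot> x \<in> I"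
    "x \<in> I \<Longrightarrow> y \<in> C \<Longrightarrow> x \<star> y \<in> I" "x \<in> I \<Longrightarrow> y \<in> C \<Longrightarrow> y \<star> x \<in> I"
    "x \<in> I \<Longrightarrow> y \<in> I \<Longrightarrow> x \<ominus> y \<in> I"
proof -
  have s: "subspace A I" using assms unfolding ideal_def by auto
  show "subspace A I" by (rule s)
  show "I \<subseteq> C" "\<zero> \<in> I" "x \<in> I \<Longrightarrow> y \<in> I \<Longrightarrow> x \<oplus> y \<in> I" "x \<in> I \<Longrightarrow> c \<odot> x \<in> I"
    "x \<in> I \<Longrightarrow> y \<in> I \<Longrightarrow> x \<ominus> y \<in> I" using subspaceD[OF s] subspace_sub[OF s] by auto
  show "x \<in> I \<Longrightarrow> y \<in> C \<Longrightarrow> x \<star> y \<in> I" "x \<in> I \<Longrightarrow> y \<in> C \<Longrightarrow> y \<star> x \<in> I"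
    using assms unfolding ideal_def by auto
qed

lemma ideal_mem: "ideal A I \<Longrightarrow> x \<in> I \<Longrightarrow> x \<in> C" using idealD(2) by blast

lemma ideal_Int: "ideal A I \<Longrightarrow> ideal A J \<Longrightarrow> ideal A (I \<inter> J)"
  unfolding ideal_def subspace_def by auto

lemma ideal_C: "ideal A C" unfolding ideal_def subspace_def by auto

lemma ideal_nz: "ideal A I \<Longrightarrow> (I \<noteq> {\<zero>}) = (\<exists>x\<in>I. x \<noteq> \<zero>)"
  using idealD(3) by blast

lemma lspan_least: "subspace A V \<Longrightarrow> X \<subseteq> V \<Longrightarrow> lspan A X \<subseteq> V"
  unfolding lspan_def by auto
lemma lspan_sup: "X \<subseteq> lspan A X" unfolding lspan_def by auto
lemma lspan_subspace: assumes "X \<subseteq> C" shows "subspace A (lspan A X)"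
proof -
  have ne: "subspace A C" unfolding subspace_def by auto
  have "lspan A X \<subseteq> C" by (rule lspan_least[OF ne assms])
  moreover have "lzero A \<in> lspan A X \<and> (\<forall>x\<in>lspan A X. \<forall>y\<in>lspan A X. x \<oplus> y \<in> lspan A X) \<and>
     (\<forall>c. \<forall>x\<in>lspan A X. c \<odot> x \<in> lspan A X)"
    unfolding lspan_def subspace_def by auto
  ultimately show ?thesis unfolding subspace_def by blast
qed

lemma prods_sub: assumes "ideal A I" shows "{x \<star> y |x y. x \<in> I \<and> y \<in> I} \<subseteq> C"
  using idealD(2)[OF assms] br_closed by blast

lemma isq_sub: assumes "ideal A I" shows "isq A I \<subseteq> I"
  unfolding isq_def
proof (rule lspan_least[OF idealD(1)[OF assms]])
  show "{x \<star> y |x y. x \<in> I \<and> y \<in> I} \<subseteq> I" using idealD(6)[OF assms] idealD(2)[OF assms] by blast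
qed

lemma isq_subspace: assumes "ideal A I" shows "subspace A (isq A I)"
  unfolding isq_def by (rule lspan_subspace, rule prods_sub[OF assms])

lemma isq_prod: assumes "x \<in> I" "y \<in> I" shows "x \<star> y \<in> isq A I"
proof -
  have "x \<star> y \<in> {a \<star> b |a b. a \<in> I \<and> b \<in> I}" using assms by blast
  thus ?thesis unfolding isq_def by (rule subsetD[OF lspan_sup])
qed

lemma isq_mono: assumes "ideal A I" "ideal A J" "I \<subseteq> J" shows "isq A I \<subseteq> isq A J"
  unfolding isq_def[of A I]
  apply (rule lspan_least)
   apply (rule isq_subspace[OF assms(2)])
  using assms(3) isq_prod by blast

lemma isq_ideal: assumes I: "ideal A I" shows "ideal A (isq A I)"
proof -
  let ?Q = "isq A I"
  have sQ: "subspace A ?Q" by (rule isq_subspace[OF I])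
  let ?V = "{v \<in> ?Q. \<forall>y\<in>C. v \<star> y \<in> ?Q \<and> y \<star> v \<in> ?Q}"
  have QC: "?Q \<subseteq> C" using subspaceD(1)[OF sQ] .
  have QCm: "\<And>v. v \<in> ?Q \<Longrightarrow> v \<in> C" using QC by blast
  have "subspace A ?V"
    unfolding subspace_def
  proof (intro conjI ballI allI)
    show "?V \<subseteq> C" using QC by auto
    show "\<zero> \<in> ?V" using subspaceD(2)[OF sQ] QCm by auto
  next
    fix x y assume "x \<in> ?V" "y \<in> ?V"
    thus "x \<oplus> y \<in> ?V" using QCm subspaceD(3)[OF sQ] by (auto simp: br_addl br_addr)
  next
    fix c x assume "x \<in> ?V"
    thus "c \<odot> x \<in> ?V" using QCm subspaceD(4)[OF sQ] by (auto simp: br_smull br_smulr)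
  qed
  moreover have "{x \<star> y |x y. x \<in> I \<and> y \<in> I} \<subseteq> ?V"
  proof (rule subsetI)
    fix p assume "p \<in> {x \<star> y |x y. x \<in> I \<and> y \<in> I}"
    then obtain a b where ab: "a \<in> I" "b \<in> I" and p: "p = a \<star> b" by blast
    show "p \<in> ?V" unfolding p
    proof -
    have aC: "a \<in> C" "b \<in> C" using ab ideal_mem[OF I] by auto
    show "a \<star> b \<in> ?V"
    proof (intro CollectI conjI ballI)
      show "a \<star> b \<in> ?Q" using isq_prod[OF ab] .
      fix y assume y: "y \<in> C"
      have "(a \<star> b) \<star> y = a \<star> (b \<star> y) \<oplus> (a \<star> y) \<star> b" by (rule jac2[OF aC(1) aC(2) y])
      moreover have "a \<star> (b \<star> y) \<in> ?Q" "(a \<star> y) \<star> b \<in> ?Q"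
        using isq_prod[OF ab(1) idealD(6)[OF I ab(2) y]] isq_prod[OF idealD(6)[OF I ab(1) y] ab(2)] by auto
      ultimately show "(a \<star> b) \<star> y \<in> ?Q" using subspaceD(3)[OF sQ] by metis
      have "y \<star> (a \<star> b) = (y \<star> a) \<star> b \<ominus> (y \<star> b) \<star> a" by (rule jac[OF y aC(1) aC(2)])
      moreover have "(y \<star> a) \<star> b \<in> ?Q" "(y \<star> b) \<star> a \<in> ?Q"
        using isq_prod[OF idealD(7)[OF I ab(1) y] ab(2)] isq_prod[OF idealD(7)[OF I ab(2) y] ab(1)] by auto
      ultimately show "y \<star> (a \<star> b) \<in> ?Q" using subspace_sub[OF sQ] by metis
    qed
    qed
  qed
  ultimately have "?Q \<subseteq> ?V" unfolding isq_def[of A I] by (rule lspan_least)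
  thus ?thesis using sQ unfolding ideal_def by blast
qed

lemma PDerD: assumes "PDer A I d"
  shows "x \<in> I \<Longrightarrow> d x \<in> C" "x \<in> I \<Longrightarrow> y \<in> I \<Longrightarrow> d (x \<oplus> y) = d x \<oplus> d y"
    "x \<in> I \<Longrightarrow> d (c \<odot> x) = c \<odot> d x" "x \<in> I \<Longrightarrow> y \<in> I \<Longrightarrow> d (x \<star> y) = d x \<star> y \<oplus> x \<star> d y"
  using assms unfolding PDer_def by auto

lemma PDer_zero: assumes "PDer A I d" "subspace A I" shows "d \<zero> = \<zero>"
proof -
  have z: "\<zero> \<in> I" using subspaceD(2)[OF assms(2)] .
  have "d \<zero> = d (0 \<odot> \<zero>)" by (simp only: smul_zero_r)
  also have "\<dots> = 0 \<odot> d \<zero>" using PDerD(3)[OF assms(1) z] .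
  also have "\<dots> = \<zero>" by (rule smul_zero_l[OF PDerD(1)[OF assms(1) z]])
  finally show ?thesis .
qed

lemma PDer_sub: assumes "PDer A I d" "subspace A I" "x \<in> I" "y \<in> I" shows "d (x \<ominus> y) = d x \<ominus> d y"
proof -
  have "ng y \<in> I" using subspaceD(4)[OF assms(2) assms(4)] .
  hence "d (x \<ominus> y) = d x \<oplus> d (ng y)" using PDerD(2)[OF assms(1) assms(3)] by (simp add: sub_def')
  thus ?thesis using PDerD(3)[OF assms(1) assms(4)] by (simp add: sub_def')
qed

lemma pder_isq: assumes d: "PDer A I d" and N: "ideal A N" and NI: "N \<subseteq> I" and x: "x \<in> isq A N"
  shows "d x \<in> N"
proof -
  let ?V = "{x \<in> N. d x \<in> N}"
  have NIm: "\<And>v. v \<in> N \<Longrightarrow> v \<in> I" using NI by blast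
  have sN: "subspace A N" using idealD(1)[OF N] .
  have d0: "d \<zero> = \<zero>"
  proof -
    have z: "\<zero> \<in> I" using idealD(3)[OF N] NI by auto
    have "d \<zero> = d (0 \<odot> \<zero>)" by simp
    also have "\<dots> = 0 \<odot> d \<zero>" using PDerD(3)[OF d z] .
    also have "\<dots> = \<zero>" using PDerD(1)[OF d z] by simp
    finally show ?thesis .
  qed
  have "subspace A ?V" unfolding subspace_def
  proof (intro conjI ballI allI)
    show "?V \<subseteq> C" using idealD(2)[OF N] by auto
    show "\<zero> \<in> ?V" using idealD(3)[OF N] d0 by auto
  next
    fix x y assume "x \<in> ?V" "y \<in> ?V"
    thus "x \<oplus> y \<in> ?V" using idealD(4)[OF N] PDerD(2)[OF d] NIm by auto
  next
    fix c x assume "x \<in> ?V"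
    thus "c \<odot> x \<in> ?V" using idealD(5)[OF N] PDerD(3)[OF d] NIm by auto
  qed
  moreover have "{x \<star> y |x y. x \<in> N \<and> y \<in> N} \<subseteq> ?V"
  proof clarify
    fix a b assume ab: "a \<in> N" "b \<in> N"
    have "d (a \<star> b) = d a \<star> b \<oplus> a \<star> d b" using PDerD(4)[OF d] ab NIm by auto
    moreover have "d a \<star> b \<in> N" "a \<star> d b \<in> N" using idealD(6)[OF N ab(1)] idealD(7)[OF N ab(2)] PDerD(1)[OF d] ab NIm by auto
    moreover have "a \<star> b \<in> N" using idealD(6)[OF N ab(1)] ab(2) ideal_mem[OF N] by auto
    ultimately show "a \<star> b \<in> N \<and> d (a \<star> b) \<in> N" using idealD(4)[OF N] by auto
  qed
  ultimately have "isq A N \<subseteq> ?V" unfolding isq_def by (rule lspan_least)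
  thus ?thesis using x by auto
qed

lemma isq_mem: "ideal A I \<Longrightarrow> x \<in> isq A I \<Longrightarrow> x \<in> I" using isq_sub by auto

end

locale sp = leib +
  assumes sp: "semiprime A"
begin

lemma semiprimeD: assumes "ideal A I" "\<forall>x\<in>I. \<forall>y\<in>I. x \<star> y = \<zero>" shows "I = {\<zero>}"
proof (rule ccontr)
  assume "I \<noteq> {\<zero>}"
  hence "{x \<star> y |x y. x \<in> I \<and> y \<in> I} \<noteq> {\<zero>}" using sp assms(1) unfolding semiprime_def by auto
  moreover have "{x \<star> y |x y. x \<in> I \<and> y \<in> I} = {\<zero>}"
  proof
    show "{x \<star> y |x y. x \<in> I \<and> y \<in> I} \<subseteq> {\<zero>}" using assms(2) by blast
    have "\<zero> = \<zero> \<star> \<zero>" by simp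
    thus "{\<zero>} \<subseteq> {x \<star> y |x y. x \<in> I \<and> y \<in> I}" using idealD(3)[OF assms(1)] by blast
  qed
  ultimately show False by auto
qed

lemma left_ann_zero: assumes a: "a \<in> C" and h: "\<forall>x\<in>C. x \<star> a = \<zero>" shows "a = \<zero>"
proof -
  let ?Z = "{z \<in> C. \<forall>x\<in>C. x \<star> z = \<zero>}"
  have "ideal A ?Z" unfolding ideal_def subspace_def
  proof (intro conjI ballI allI)
    fix x y assume x: "x \<in> ?Z" and y: "y \<in> C"
    show "x \<star> y \<in> ?Z"
    proof (intro CollectI conjI ballI)
      show "x \<star> y \<in> C" using x y by auto
      fix u assume u: "u \<in> C"
      have "u \<star> (x \<star> y) = (u \<star> x) \<star> y \<ominus> (u \<star> y) \<star> x" using x y u by (intro jac) auto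
      thus "u \<star> (x \<star> y) = \<zero>" using x u y by auto
    qed
    show "y \<star> x \<in> ?Z"
    proof (intro CollectI conjI ballI)
      show "y \<star> x \<in> C" using x y by auto
      fix u assume u: "u \<in> C"
      have "u \<star> (y \<star> x) = (u \<star> y) \<star> x \<ominus> (u \<star> x) \<star> y" using x y u by (intro jac) auto
      thus "u \<star> (y \<star> x) = \<zero>" using x u y by auto
    qed
  qed (auto simp: br_addr br_smulr)
  moreover have "\<forall>x\<in>?Z. \<forall>y\<in>?Z. x \<star> y = \<zero>" by auto
  ultimately have "?Z = {\<zero>}" by (rule semiprimeD)
  thus ?thesis using a h by auto
qed

lemma sq_zero[simp]: "x \<in> C \<Longrightarrow> x \<star> x = \<zero>"
  using left_ann_zero br_sq_left by auto

lemma anticomm: assumes "x \<in> C" "y \<in> C" shows "x \<star> y = ng (y \<star> x)"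
proof -
  have "\<zero> = (x \<oplus> y) \<star> (x \<oplus> y)" using assms by simp
  also have "\<dots> = x \<star> x \<oplus> y \<star> x \<oplus> (x \<star> y \<oplus> y \<star> y)" using assms by (simp add: br_addl br_addr del: sq_zero)
  also have "\<dots> = y \<star> x \<oplus> x \<star> y" using assms by simp
  also have "\<dots> = x \<star> y \<oplus> y \<star> x" using assms by (simp add: add_comm)
  finally have "x \<star> y \<oplus> y \<star> x = \<zero>" by (rule sym)
  thus ?thesis using sum_zero_neg assms by simp
qed

lemma swap_zero: assumes "x \<in> C" "y \<in> C" shows "(x \<star> y = \<zero>) = (y \<star> x = \<zero>)"
proof
  assume "x \<star> y = \<zero>" thus "y \<star> x = \<zero>" using anticomm[OF assms(2,1)] by simp
next
  assume "y \<star> x = \<zero>" thus "x \<star> y = \<zero>" using anticomm[OF assms] by simp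
qed

lemma ideal_neq0: "ideal A I \<Longrightarrow> I \<noteq> {\<zero>} \<Longrightarrow> \<exists>x\<in>I. x \<noteq> \<zero>"
  using ideal_nz by blast

lemma ess_ideal: "essential A K \<Longrightarrow> ideal A K" unfolding essential_def by auto
lemma ess_sub: "essential A K \<Longrightarrow> K \<subseteq> C" using ess_ideal idealD(2) by blast

lemma ann_ess: assumes K: "essential A K" and a: "a \<in> C" and h: "\<forall>k\<in>K. a \<star> k = \<zero>" shows "a = \<zero>"
proof -
  have KI: "ideal A K" using K unfolding essential_def by auto
  have KC: "\<And>k. k \<in> K \<Longrightarrow> k \<in> C" using ideal_mem[OF KI] .
  let ?Z = "{z \<in> C. \<forall>k\<in>K. z \<star> k = \<zero>}"
  have Zi: "ideal A ?Z" unfolding ideal_def subspace_def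
  proof (intro conjI ballI allI)
    fix x y assume x: "x \<in> ?Z" and y: "y \<in> C"
    show xy: "x \<star> y \<in> ?Z"
    proof (intro CollectI conjI ballI)
      show "x \<star> y \<in> C" using x y by auto
      fix u assume u: "u \<in> K"
      have uC: "u \<in> C" using KC u .
      have "(x \<star> y) \<star> u = x \<star> (y \<star> u) \<oplus> (x \<star> u) \<star> y" using x y uC by (intro jac2) auto
      moreover have "y \<star> u \<in> K" using idealD(7)[OF KI u y] .
      ultimately show "(x \<star> y) \<star> u = \<zero>" using x u y uC by auto
    qed
    show "y \<star> x \<in> ?Z"
    proof (intro CollectI conjI ballI)
      show "y \<star> x \<in> C" using x y by auto
      fix u assume u: "u \<in> K"
      have uC: "u \<in> C" using KC u .
      have "y \<star> x = ng (x \<star> y)" using x y by (intro anticomm) auto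
      hence "(y \<star> x) \<star> u = ng ((x \<star> y) \<star> u)" using br_smull x y uC by auto
      thus "(y \<star> x) \<star> u = \<zero>" using xy u by auto
    qed
  next
    show "?Z \<subseteq> C" by auto
    show "\<zero> \<in> ?Z" using KC by auto
  next
    fix x y assume "x \<in> ?Z" "y \<in> ?Z"
    thus "x \<oplus> y \<in> ?Z" using KC by (auto simp: br_addl)
  next
    fix c x assume "x \<in> ?Z"
    thus "c \<odot> x \<in> ?Z" using KC by (auto simp: br_smull)
  qed
  have ZK: "ideal A (?Z \<inter> K)" using ideal_Int[OF Zi KI] .
  have "?Z \<inter> K = {\<zero>}" using ZK by (rule semiprimeD) auto
  hence "K \<inter> ?Z = {\<zero>}" by (simp add: Int_commute)
  hence "?Z = {\<zero>}" using K Zi unfolding essential_def by blast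
  thus ?thesis using a h by auto
qed

lemma ann_ess': assumes K: "essential A K" and a: "a \<in> C" and h: "\<forall>k\<in>K. k \<star> a = \<zero>" shows "a = \<zero>"
proof -
  have "\<forall>k\<in>K. a \<star> k = \<zero>"
  proof
    fix k assume k: "k \<in> K"
    have "k \<in> C" using ess_sub[OF K] k by blast
    thus "a \<star> k = \<zero>" using swap_zero[OF a] h k by blast
  qed
  thus ?thesis using ann_ess K a by blast
qed

lemma ess_Int: assumes I: "essential A I" and J: "essential A J" shows "essential A (I \<inter> J)"
  unfolding essential_def
proof (intro conjI allI impI)
  show "ideal A (I \<inter> J)" using ideal_Int ess_ideal I J by blast
  fix M assume M: "ideal A M \<and> M \<noteq> {\<zero>}"
  have JM: "ideal A (J \<inter> M)" using ideal_Int ess_ideal J M by blast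
  have "J \<inter> M \<noteq> {\<zero>}" using J M unfolding essential_def by blast
  hence "I \<inter> (J \<inter> M) \<noteq> {\<zero>}" using I JM unfolding essential_def by blast
  thus "I \<inter> J \<inter> M \<noteq> {\<zero>}" by (simp add: Int_assoc)
qed

lemma ess_C: "essential A C"
  unfolding essential_def using ideal_C idealD(2) by (auto simp: Int_absorb1)

lemma ess_isq: assumes I: "essential A I" shows "essential A (isq A I)"
  unfolding essential_def
proof (intro conjI allI impI)
  have II: "ideal A I" using ess_ideal I .
  show "ideal A (isq A I)" using isq_ideal II .
  fix M assume M: "ideal A M \<and> M \<noteq> {\<zero>}"
  have IM: "ideal A (I \<inter> M)" using ideal_Int II M by blast
  have "I \<inter> M \<noteq> {\<zero>}" using I M unfolding essential_def by blast
  then obtain a b where ab: "a \<in> I \<inter> M" "b \<in> I \<inter> M" "a \<star> b \<noteq> \<zero>"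
    using semiprimeD[OF IM] by blast
  have "a \<star> b \<in> isq A I" using isq_prod ab by auto
  moreover have "a \<star> b \<in> M" using idealD(6)[of M a b] M ab idealD(2)[OF II] by auto
  ultimately show "isq A I \<inter> M \<noteq> {\<zero>}" using ab by auto
qed

lemma agree: assumes d: "PDer A I d" and m: "PDer A J m" and I: "ideal A I" and J: "ideal A J"
  and K: "essential A K" and KIJ: "K \<subseteq> I \<inter> J" and eq: "\<forall>x\<in>K. d x = m x"
  and x: "x \<in> I \<inter> J"
  shows "d x = m x"
proof -
  have KI: "ideal A K" using ess_ideal K .
  have xC: "x \<in> C" using x idealD(2)[OF I] by auto
  have dx: "d x \<in> C" "m x \<in> C" using x PDerD(1) d m by auto
  have "\<forall>k\<in>K. (d x \<ominus> m x) \<star> k = \<zero>"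
  proof
    fix k assume k: "k \<in> K"
    have kC: "k \<in> C" using k idealD(2)[OF KI] by auto
    have xk: "x \<star> k \<in> K" using idealD(7)[OF KI k xC] .
    have kIJ: "k \<in> I" "k \<in> J" using k KIJ by auto
    have "d (x \<star> k) = d x \<star> k \<oplus> x \<star> d k" using PDerD(4)[OF d] x kIJ by auto
    moreover have "m (x \<star> k) = m x \<star> k \<oplus> x \<star> m k" using PDerD(4)[OF m] x kIJ by auto
    moreover have "d (x \<star> k) = m (x \<star> k)" "d k = m k" using eq xk k by auto
    ultimately have "d x \<star> k \<oplus> x \<star> m k = m x \<star> k \<oplus> x \<star> m k" by simp
    hence "d x \<star> k = m x \<star> k" using add_cancel_r PDerD(1)[OF m] kIJ xC kC dx by (meson br_closed)
    thus "(d x \<ominus> m x) \<star> k = \<zero>" using br_subl dx kC by simp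
  qed
  hence "d x \<ominus> m x = \<zero>" using ann_ess[OF K] dx by simp
  thus ?thesis using sub_eq0 dx by blast
qed

end

context leib begin

lemma sub_sub_sub: "a \<in> C \<Longrightarrow> b \<in> C \<Longrightarrow> c \<in> C \<Longrightarrow> d \<in> C \<Longrightarrow> (a \<ominus> b) \<ominus> (c \<ominus> d) = (a \<oplus> d) \<ominus> (b \<oplus> c)"
  by (simp add: sub_def' neg_add add_ac)
lemma sub_add_sub: "a \<in> C \<Longrightarrow> b \<in> C \<Longrightarrow> c \<in> C \<Longrightarrow> d \<in> C \<Longrightarrow> (a \<ominus> b) \<oplus> (c \<ominus> d) = (a \<oplus> c) \<ominus> (b \<oplus> d)"
  by (simp add: sub_def' neg_add add_ac)
lemma neg_sub: "a \<in> C \<Longrightarrow> b \<in> C \<Longrightarrow> ng (a \<ominus> b) = b \<ominus> a"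
  by (simp add: sub_def' neg_add add_ac)
lemma add_sub_r: "a \<in> C \<Longrightarrow> b \<in> C \<Longrightarrow> c \<in> C \<Longrightarrow> a \<oplus> (b \<ominus> c) = (a \<oplus> b) \<ominus> c"
  by (simp add: sub_def' add_ac)
lemma add_sub_l: "a \<in> C \<Longrightarrow> b \<in> C \<Longrightarrow> c \<in> C \<Longrightarrow> (a \<ominus> b) \<oplus> c = (a \<oplus> c) \<ominus> b"
  by (simp add: sub_def' add_ac)
lemma sub_sub_r: "a \<in> C \<Longrightarrow> b \<in> C \<Longrightarrow> c \<in> C \<Longrightarrow> a \<ominus> (b \<ominus> c) = (a \<oplus> c) \<ominus> b"
  by (simp add: sub_def' neg_add add_ac)
lemma sub_sub_l: "a \<in> C \<Longrightarrow> b \<in> C \<Longrightarrow> c \<in> C \<Longrightarrow> (a \<ominus> b) \<ominus> c = a \<ominus> (b \<oplus> c)"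
  by (simp add: sub_def' neg_add add_ac)
lemma smul_sub: "a \<in> C \<Longrightarrow> b \<in> C \<Longrightarrow> c \<odot> (a \<ominus> b) = c \<odot> a \<ominus> c \<odot> b"
  by (simp add: sub_def' smul_rdist smul_assoc mult.commute)
lemma neg_is_sub: "a \<in> C \<Longrightarrow> ng a = \<zero> \<ominus> a" by (simp add: sub_def')

lemmas sub_norm = sub_sub_sub sub_add_sub neg_sub add_sub_r add_sub_l sub_sub_r sub_sub_l

end

context sp begin

abbreviation QP where "QP \<equiv> Qpairs A"
abbreviation QR where "QR \<equiv> Qrel A"
abbreviation cls where "cls d I \<equiv> qclass A d I"

lemma QP_iff: "((d, I) \<in> QP) = (essential A I \<and> PDer A I d)" by (simp add: Qpairs_def)

lemma QR_iff: "(((d, I), (m, J)) \<in> QR) = ((d, I) \<in> QP \<and> (m, J) \<in> QP \<and>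
      (\<exists>K. essential A K \<and> K \<subseteq> I \<inter> J \<and> (\<forall>x\<in>K. d x = m x)))"
  by (simp add: Qrel_def)

lemma equiv_QR: "equiv QP QR"
proof (rule equivI)
  show "QR \<subseteq> QP \<times> QP" unfolding Qrel_def by auto
  show "refl_on QP QR"
  proof (rule refl_onI)
    fix p assume "p \<in> QP"
    then obtain d I where p: "p = (d, I)" and "essential A I" "PDer A I d" by (cases p) (auto simp: QP_iff)
    thus "(p, p) \<in> QR" unfolding p QR_iff using QP_iff by blast
  qed
  show "sym QR"
  proof (rule symI)
    fix p q assume "(p, q) \<in> QR"
    thus "(q, p) \<in> QR" unfolding Qrel_def by auto
  qed
  show "trans QR"
  proof (rule transI)
    fix p q r assume pq: "(p, q) \<in> QR" and qr: "(q, r) \<in> QR"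
    obtain d I where p: "p = (d, I)" by (cases p)
    obtain m J where q: "q = (m, J)" by (cases q)
    obtain n M where r: "r = (n, M)" by (cases r)
    from pq obtain K1 where K1: "essential A K1" "K1 \<subseteq> I \<inter> J" "\<forall>x\<in>K1. d x = m x"
      unfolding p q QR_iff by blast
    from qr obtain K2 where K2: "essential A K2" "K2 \<subseteq> J \<inter> M" "\<forall>x\<in>K2. m x = n x"
      unfolding q r QR_iff by blast
    have "essential A (K1 \<inter> K2)" using ess_Int K1 K2 by blast
    moreover have "K1 \<inter> K2 \<subseteq> I \<inter> M" using K1 K2 by blast
    moreover have "\<forall>x\<in>K1 \<inter> K2. d x = n x" using K1 K2 by auto
    ultimately show "(p, r) \<in> QR" using pq qr unfolding p q r QR_iff by blast
  qed
qed

lemma cls_in: "(d, I) \<in> QP \<Longrightarrow> cls d I \<in> QP // QR"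
  unfolding qclass_def by (rule quotientI)

lemma cls_eq_iff: "(d, I) \<in> QP \<Longrightarrow> (m, J) \<in> QP \<Longrightarrow> (cls d I = cls m J) = (((d, I), (m, J)) \<in> QR)"
  unfolding qclass_def by (rule eq_equiv_class_iff[OF equiv_QR])

lemma cls_eqI: assumes "(d, I) \<in> QP" "(m, J) \<in> QP" "essential A K" "K \<subseteq> I" "K \<subseteq> J"
  "\<And>x. x \<in> K \<Longrightarrow> d x = m x"
  shows "cls d I = cls m J"
  unfolding cls_eq_iff[OF assms(1,2)] QR_iff using assms by blast

lemma cls_eqD: assumes dI: "(d, I) \<in> QP" and mJ: "(m, J) \<in> QP" and eq: "cls d I = cls m J"
  and x: "x \<in> I" "x \<in> J"
  shows "d x = m x"
proof -
  obtain K where K: "essential A K" "K \<subseteq> I \<inter> J" "\<forall>x\<in>K. d x = m x"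
    using eq cls_eq_iff[OF dI mJ] QR_iff by blast
  show ?thesis
    using agree[of I d J m K x] dI mJ K x by (auto simp: QP_iff ess_ideal)
qed

lemma Qcases: assumes "q \<in> QP // QR"
  obtains d I where "(d, I) \<in> QP" "q = cls d I"
proof -
  from assms obtain p where p: "p \<in> QP" "q = QR `` {p}" by (rule quotientE)
  obtain d I where "p = (d, I)" by (cases p)
  thus ?thesis using that p unfolding qclass_def by blast
qed

lemma qrep_rel: assumes dI: "(d, I) \<in> QP" and r: "qrep (cls d I) = (d', I')"
  shows "(d', I') \<in> QP" "\<exists>K. essential A K \<and> K \<subseteq> I \<inter> I' \<and> (\<forall>x\<in>K. d x = d' x)"
proof -
  have "(d, I) \<in> cls d I" unfolding qclass_def by (rule equiv_class_self[OF equiv_QR dI])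
  hence "qrep (cls d I) \<in> cls d I" unfolding qrep_def by (rule someI)
  hence "(d', I') \<in> cls d I" using r by simp
  hence "((d, I), (d', I')) \<in> QR" unfolding qclass_def by simp
  thus "(d', I') \<in> QP" "\<exists>K. essential A K \<and> K \<subseteq> I \<inter> I' \<and> (\<forall>x\<in>K. d x = d' x)"
    unfolding QR_iff by auto
qed

lemma pd_zero: "((\<lambda>x. \<zero>), C) \<in> QP"
  unfolding QP_iff PDer_def using ess_C by simp

lemma pd_R: assumes a: "a \<in> C" shows "((\<lambda>y. y \<star> a), C) \<in> QP"
  unfolding QP_iff PDer_def
proof (intro conjI ballI allI)
  show "essential A C" by (rule ess_C)
  fix x y assume "x \<in> C" "y \<in> C"
  thus "(x \<oplus> y) \<star> a = x \<star> a \<oplus> y \<star> a" using a by (simp add: br_addl)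
  show "(x \<star> y) \<star> a = (x \<star> a) \<star> y \<oplus> x \<star> (y \<star> a)"
    using jac2[OF \<open>x \<in> C\<close> \<open>y \<in> C\<close> a] \<open>x \<in> C\<close> \<open>y \<in> C\<close> a by (simp add: add_comm)
next
  fix c x assume "x \<in> C" thus "(c \<odot> x) \<star> a = c \<odot> (x \<star> a)" using a by (simp add: br_smull)
qed (use a in auto)

lemma pd_add: assumes dI: "(d, I) \<in> QP" and mJ: "(m, J) \<in> QP"
  shows "((\<lambda>x. d x \<oplus> m x), I \<inter> J) \<in> QP"
proof -
  have I: "essential A I" and d: "PDer A I d" using dI by (auto simp: QP_iff)
  have J: "essential A J" and m: "PDer A J m" using mJ by (auto simp: QP_iff)
  have IC: "\<And>x. x \<in> I \<Longrightarrow> x \<in> C" using ess_sub[OF I] by blast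
  have JC: "\<And>x. x \<in> J \<Longrightarrow> x \<in> C" using ess_sub[OF J] by blast
  have IJ: "ideal A (I \<inter> J)" using ess_ideal[OF ess_Int[OF I J]] .
  show ?thesis unfolding QP_iff PDer_def
  proof (intro conjI ballI allI)
    show "essential A (I \<inter> J)" using ess_Int[OF I J] .
    fix x assume x: "x \<in> I \<inter> J"
    have dx: "d x \<in> C" "m x \<in> C" using PDerD(1)[OF d] PDerD(1)[OF m] x by auto
    thus "d x \<oplus> m x \<in> C" by simp
    fix c
    show "d (c \<odot> x) \<oplus> m (c \<odot> x) = c \<odot> (d x \<oplus> m x)"
      using PDerD(3)[OF d] PDerD(3)[OF m] x dx by (simp add: smul_rdist)
  next
    fix x y assume x: "x \<in> I \<inter> J" and y: "y \<in> I \<inter> J"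
    have xC: "x \<in> C" "y \<in> C" using IC x y by auto
    have dx: "d x \<in> C" "m x \<in> C" "d y \<in> C" "m y \<in> C" using PDerD(1)[OF d] PDerD(1)[OF m] x y by auto
    show "d (x \<oplus> y) \<oplus> m (x \<oplus> y) = d x \<oplus> m x \<oplus> (d y \<oplus> m y)"
      using PDerD(2)[OF d] PDerD(2)[OF m] x y dx by (simp add: add_ac)
    show "d (x \<star> y) \<oplus> m (x \<star> y) = (d x \<oplus> m x) \<star> y \<oplus> x \<star> (d y \<oplus> m y)"
      using PDerD(4)[OF d] PDerD(4)[OF m] x y dx xC by (simp add: br_addl br_addr add_ac)
  qed
qed

lemma pd_smul: assumes dI: "(d, I) \<in> QP"
  shows "((\<lambda>y. d (c \<odot> y)), I) \<in> QP"
proof -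
  have I: "essential A I" and d: "PDer A I d" using dI by (auto simp: QP_iff)
  have IC: "\<And>x. x \<in> I \<Longrightarrow> x \<in> C" using ess_sub[OF I] by blast
  have sI: "subspace A I" using idealD(1)[OF ess_ideal[OF I]] .
  have cI: "\<And>x c. x \<in> I \<Longrightarrow> c \<odot> x \<in> I" using subspaceD(4)[OF sI] .
  show ?thesis unfolding QP_iff PDer_def
  proof (intro conjI ballI allI)
    show "essential A I" by (rule I)
    fix x assume x: "x \<in> I"
    have dx: "d x \<in> C" using PDerD(1)[OF d] x by auto
    show "d (c \<odot> x) \<in> C" using PDerD(3)[OF d x] dx by simp
    fix b
    show "d (c \<odot> b \<odot> x) = b \<odot> d (c \<odot> x)"
      using PDerD(3)[OF d] x cI dx by (simp add: smul_assoc mult.commute)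
  next
    fix x y assume x: "x \<in> I" and y: "y \<in> I"
    have xC: "x \<in> C" "y \<in> C" using IC x y by auto
    have dx: "d x \<in> C" "d y \<in> C" using PDerD(1)[OF d] x y by auto
    show "d (c \<odot> (x \<oplus> y)) = d (c \<odot> x) \<oplus> d (c \<odot> y)"
      using PDerD(2,3)[OF d] x y dx xC subspaceD(3)[OF sI] cI by (simp add: smul_rdist)
    show "d (c \<odot> (x \<star> y)) = d (c \<odot> x) \<star> y \<oplus> x \<star> d (c \<odot> y)"
      using PDerD(3,4)[OF d] x y dx xC idealD(6)[OF ess_ideal[OF I]]
      by (simp add: smul_rdist br_smull br_smulr)
  qed
qed

lemma pd_br: assumes dI: "(d, I) \<in> QP" and mJ: "(m, J) \<in> QP"
  shows "((\<lambda>x. m (d x) \<ominus> d (m x)), isq A (I \<inter> J)) \<in> QP"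
proof -
  have I: "essential A I" and d: "PDer A I d" using dI by (auto simp: QP_iff)
  have J: "essential A J" and m: "PDer A J m" using mJ by (auto simp: QP_iff)
  have N: "essential A (I \<inter> J)" using ess_Int[OF I J] .
  have NI: "ideal A (I \<inter> J)" using ess_ideal[OF N] .
  let ?P = "isq A (I \<inter> J)"
  have PI: "ideal A ?P" using isq_ideal[OF NI] .
  have sP: "subspace A ?P" using idealD(1)[OF PI] .
  have PN: "\<And>x. x \<in> ?P \<Longrightarrow> x \<in> I \<inter> J" using isq_mem[OF NI] .
  have PC: "\<And>x. x \<in> ?P \<Longrightarrow> x \<in> C" using PN ideal_mem[OF NI] by blast
  have dP: "\<And>x. x \<in> ?P \<Longrightarrow> d x \<in> I \<inter> J" using pder_isq[OF d NI] by blast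
  have mP: "\<And>x. x \<in> ?P \<Longrightarrow> m x \<in> I \<inter> J" using pder_isq[OF m NI] by blast
  have dC: "\<And>x. x \<in> I \<Longrightarrow> d x \<in> C" using PDerD(1)[OF d] .
  have mC: "\<And>x. x \<in> J \<Longrightarrow> m x \<in> C" using PDerD(1)[OF m] .
  have NC: "\<And>x. x \<in> I \<inter> J \<Longrightarrow> x \<in> C" using ideal_mem[OF NI] .
  show ?thesis unfolding QP_iff PDer_def
  proof (intro conjI ballI allI)
    show "essential A ?P" using ess_isq[OF N] .
    fix x assume x: "x \<in> ?P"
    have xs: "d x \<in> I \<inter> J" "m x \<in> I \<inter> J" "x \<in> I \<inter> J" using dP mP PN x by auto
    have c1: "m (d x) \<in> C" "d (m x) \<in> C" using dC mC xs by auto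
    thus "m (d x) \<ominus> d (m x) \<in> C" by simp
    fix c
    show "m (d (c \<odot> x)) \<ominus> d (m (c \<odot> x)) = c \<odot> (m (d x) \<ominus> d (m x))"
      using PDerD(3)[OF d] PDerD(3)[OF m] xs c1 by (simp add: smul_sub)
  next
    fix x y assume x: "x \<in> ?P" and y: "y \<in> ?P"
    have xs: "d x \<in> I \<inter> J" "m x \<in> I \<inter> J" "x \<in> I \<inter> J" "d y \<in> I \<inter> J" "m y \<in> I \<inter> J" "y \<in> I \<inter> J"
      using dP mP PN x y by auto
    have c1: "m (d x) \<in> C" "d (m x) \<in> C" "m (d y) \<in> C" "d (m y) \<in> C" using dC mC xs by auto
    have c0: "x \<in> C" "y \<in> C" "d x \<in> C" "m x \<in> C" "d y \<in> C" "m y \<in> C" using NC xs by auto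
    show "m (d (x \<oplus> y)) \<ominus> d (m (x \<oplus> y)) = m (d x) \<ominus> d (m x) \<oplus> (m (d y) \<ominus> d (m y))"
      using PDerD(2)[OF d] PDerD(2)[OF m] xs c1 by (simp add: sub_add_sub)
    have e1: "m (d (x \<star> y)) = (m (d x) \<star> y \<oplus> d x \<star> m y) \<oplus> (m x \<star> d y \<oplus> x \<star> m (d y))"
    proof -
      have "m (d (x \<star> y)) = m (d x \<star> y \<oplus> x \<star> d y)" using PDerD(4)[OF d] xs by simp
      also have "\<dots> = m (d x \<star> y) \<oplus> m (x \<star> d y)"
        using PDerD(2)[OF m] idealD(6,7)[OF NI] xs c0 by simp
      also have "\<dots> = (m (d x) \<star> y \<oplus> d x \<star> m y) \<oplus> (m x \<star> d y \<oplus> x \<star> m (d y))"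
        using PDerD(4)[OF m] xs by simp
      finally show ?thesis .
    qed
    have e2: "d (m (x \<star> y)) = (d (m x) \<star> y \<oplus> m x \<star> d y) \<oplus> (d x \<star> m y \<oplus> x \<star> d (m y))"
    proof -
      have "d (m (x \<star> y)) = d (m x \<star> y \<oplus> x \<star> m y)" using PDerD(4)[OF m] xs by simp
      also have "\<dots> = d (m x \<star> y) \<oplus> d (x \<star> m y)"
        using PDerD(2)[OF d] idealD(6,7)[OF NI] xs c0 by simp
      also have "\<dots> = (d (m x) \<star> y \<oplus> m x \<star> d y) \<oplus> (d x \<star> m y \<oplus> x \<star> d (m y))"
        using PDerD(4)[OF d] xs by simp
      finally show ?thesis .
    qed
    show "m (d (x \<star> y)) \<ominus> d (m (x \<star> y)) = (m (d x) \<ominus> d (m x)) \<star> y \<oplus> x \<star> (m (d y) \<ominus> d (m y))"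
      unfolding e1 e2 using c0 c1
      by (simp add: br_subl br_subr sub_norm sub_eq_sub_iff add_ac)
  qed
qed


lemma qadd_cls: assumes dI: "(d, I) \<in> QP" and mJ: "(m, J) \<in> QP"
  shows "qadd A (cls d I) (cls m J) = cls (\<lambda>x. d x \<oplus> m x) (I \<inter> J)"
proof -
  obtain d' I' where r1: "qrep (cls d I) = (d', I')" by (cases "qrep (cls d I)")
  obtain m' J' where r2: "qrep (cls m J) = (m', J')" by (cases "qrep (cls m J)")
  note q1 = qrep_rel[OF dI r1] and q2 = qrep_rel[OF mJ r2]
  obtain K1 where K1: "essential A K1" "K1 \<subseteq> I \<inter> I'" "\<forall>x\<in>K1. d x = d' x" using q1(2) by blast
  obtain K2 where K2: "essential A K2" "K2 \<subseteq> J \<inter> J'" "\<forall>x\<in>K2. m x = m' x" using q2(2) by blast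
  have "qadd A (cls d I) (cls m J) = cls (\<lambda>x. d' x \<oplus> m' x) (I' \<inter> J')"
    unfolding qadd_def r1 r2 by simp
  also have "\<dots> = cls (\<lambda>x. d x \<oplus> m x) (I \<inter> J)"
  proof (rule cls_eqI[where K = "K1 \<inter> K2"])
    show "((\<lambda>x. d' x \<oplus> m' x), I' \<inter> J') \<in> QP" using pd_add q1(1) q2(1) by blast
    show "((\<lambda>x. d x \<oplus> m x), I \<inter> J) \<in> QP" using pd_add dI mJ by blast
    show "essential A (K1 \<inter> K2)" using ess_Int K1 K2 by blast
    show "K1 \<inter> K2 \<subseteq> I' \<inter> J'" "K1 \<inter> K2 \<subseteq> I \<inter> J" using K1 K2 by auto
    fix x assume "x \<in> K1 \<inter> K2" thus "d' x \<oplus> m' x = d x \<oplus> m x" using K1 K2 by auto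
  qed
  finally show ?thesis .
qed

lemma qsmul_cls: assumes dI: "(d, I) \<in> QP"
  shows "qsmul A c (cls d I) = cls (\<lambda>y. d (c \<odot> y)) I"
proof -
  obtain d' I' where r1: "qrep (cls d I) = (d', I')" by (cases "qrep (cls d I)")
  note q1 = qrep_rel[OF dI r1]
  obtain K1 where K1: "essential A K1" "K1 \<subseteq> I \<inter> I'" "\<forall>x\<in>K1. d x = d' x" using q1(2) by blast
  have K1s: "\<And>x. x \<in> K1 \<Longrightarrow> c \<odot> x \<in> K1" using idealD(5)[OF ess_ideal[OF K1(1)]] .
  have "qsmul A c (cls d I) = cls (\<lambda>y. d' (c \<odot> y)) I'"
    unfolding qsmul_def r1 by simp
  also have "\<dots> = cls (\<lambda>y. d (c \<odot> y)) I"
  proof (rule cls_eqI[where K = "K1"])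
    show "((\<lambda>y. d' (c \<odot> y)), I') \<in> QP" using pd_smul q1(1) by blast
    show "((\<lambda>y. d (c \<odot> y)), I) \<in> QP" using pd_smul dI by blast
    show "essential A K1" using K1 by blast
    show "K1 \<subseteq> I'" "K1 \<subseteq> I" using K1 by auto
    fix x assume "x \<in> K1" thus "d' (c \<odot> x) = d (c \<odot> x)" using K1 K1s by auto
  qed
  finally show ?thesis .
qed

lemma qbr_cls: assumes dI: "(d, I) \<in> QP" and mJ: "(m, J) \<in> QP"
  shows "qbr A (cls d I) (cls m J) = cls (\<lambda>x. m (d x) \<ominus> d (m x)) (isq A (I \<inter> J))"
proof -
  obtain d' I' where r1: "qrep (cls d I) = (d', I')" by (cases "qrep (cls d I)")
  obtain m' J' where r2: "qrep (cls m J) = (m', J')" by (cases "qrep (cls m J)")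
  note q1 = qrep_rel[OF dI r1] and q2 = qrep_rel[OF mJ r2]
  obtain K1 where K1: "essential A K1" "K1 \<subseteq> I \<inter> I'" "\<forall>x\<in>K1. d x = d' x" using q1(2) by blast
  obtain K2 where K2: "essential A K2" "K2 \<subseteq> J \<inter> J'" "\<forall>x\<in>K2. m x = m' x" using q2(2) by blast
  have I: "essential A I" and d: "PDer A I d" using dI by (auto simp: QP_iff)
  have J: "essential A J" and m: "PDer A J m" using mJ by (auto simp: QP_iff)
  have I': "essential A I'" using q1(1) by (auto simp: QP_iff)
  have J': "essential A J'" using q2(1) by (auto simp: QP_iff)
  let ?N = "K1 \<inter> K2"
  have N: "essential A ?N" using ess_Int K1 K2 by blast
  have NI: "ideal A ?N" using ess_ideal[OF N] .
  have "qbr A (cls d I) (cls m J) = cls (\<lambda>x. m' (d' x) \<ominus> d' (m' x)) (isq A (I' \<inter> J'))"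
    unfolding qbr_def r1 r2 by simp
  also have "\<dots> = cls (\<lambda>x. m (d x) \<ominus> d (m x)) (isq A (I \<inter> J))"
  proof (rule cls_eqI[where K = "isq A ?N"])
    show "((\<lambda>x. m' (d' x) \<ominus> d' (m' x)), isq A (I' \<inter> J')) \<in> QP" using pd_br q1(1) q2(1) by blast
    show "((\<lambda>x. m (d x) \<ominus> d (m x)), isq A (I \<inter> J)) \<in> QP" using pd_br dI mJ by blast
    show "essential A (isq A ?N)" using ess_isq[OF N] .
    show "isq A ?N \<subseteq> isq A (I' \<inter> J')"
      using isq_mono[OF NI ess_ideal[OF ess_Int[OF I' J']]] K1 K2 by blast
    show "isq A ?N \<subseteq> isq A (I \<inter> J)"
      using isq_mono[OF NI ess_ideal[OF ess_Int[OF I J]]] K1 K2 by blast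
    fix x assume x: "x \<in> isq A ?N"
    have xN: "x \<in> ?N" using isq_mem[OF NI x] .
    have "d x \<in> ?N" using pder_isq[OF d NI _ x] K1 by blast
    moreover have "m x \<in> ?N" using pder_isq[OF m NI _ x] K2 by blast
    ultimately show "m' (d' x) \<ominus> d' (m' x) = m (d x) \<ominus> d (m x)" using K1 K2 xN by auto
  qed
  finally show ?thesis .
qed

lemma qzero_cls: "qzero A = cls (\<lambda>x. \<zero>) C" unfolding qzero_def ..

end

context sp begin

abbreviation Q where "Q \<equiv> Qalg A"

lemma Q_simps: "lcar Q = QP // QR" "ladd Q = qadd A" "lzero Q = qzero A" "lsmul Q = qsmul A" "lbr Q = qbr A"
  by (simp_all add: Qalg_def)

lemma QP_E: assumes "(d, I) \<in> QP"
  shows "essential A I" "PDer A I d" "ideal A I" "\<And>x. x \<in> I \<Longrightarrow> x \<in> C" "\<And>x. x \<in> I \<Longrightarrow> d x \<in> C"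
    "subspace A I"
  using assms ess_ideal ess_sub PDerD(1) idealD(1) by (auto simp: QP_iff)

lemma q_zero_in: "qzero A \<in> QP // QR" unfolding qzero_cls by (rule cls_in[OF pd_zero])

lemma q_add_in: "p \<in> QP // QR \<Longrightarrow> q \<in> QP // QR \<Longrightarrow> qadd A p q \<in> QP // QR"
  by (elim Qcases) (simp add: qadd_cls cls_in pd_add)

lemma q_smul_in: "p \<in> QP // QR \<Longrightarrow> qsmul A c p \<in> QP // QR"
  by (elim Qcases) (simp add: qsmul_cls cls_in pd_smul)

lemma q_br_in: "p \<in> QP // QR \<Longrightarrow> q \<in> QP // QR \<Longrightarrow> qbr A p q \<in> QP // QR"
  by (elim Qcases) (simp add: qbr_cls cls_in pd_br)

lemma q_add_assoc: assumes a: "(d, I) \<in> QP" "(m, J) \<in> QP" "(n, M) \<in> QP"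
  shows "qadd A (qadd A (cls d I) (cls m J)) (cls n M) = qadd A (cls d I) (qadd A (cls m J) (cls n M))"
proof -
  note E1 = QP_E[OF a(1)] and E2 = QP_E[OF a(2)] and E3 = QP_E[OF a(3)]
  show ?thesis
    apply (simp add: qadd_cls pd_add a)
    apply (rule cls_eqI[where K = "I \<inter> J \<inter> M"])
    using a E1 E2 E3 by (auto simp: pd_add ess_Int add_assoc)
qed

lemma q_add_comm: assumes a: "(d, I) \<in> QP" "(m, J) \<in> QP"
  shows "qadd A (cls d I) (cls m J) = qadd A (cls m J) (cls d I)"
proof -
  note E1 = QP_E[OF a(1)] and E2 = QP_E[OF a(2)]
  show ?thesis
    apply (simp add: qadd_cls pd_add a)
    apply (rule cls_eqI[where K = "I \<inter> J"])
    using a E1 E2 by (auto simp: pd_add ess_Int add_comm)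
qed

lemma q_zero_l: assumes a: "(d, I) \<in> QP"
  shows "qadd A (qzero A) (cls d I) = cls d I"
proof -
  note E1 = QP_E[OF a(1)]
  show ?thesis
    apply (simp add: qzero_cls qadd_cls pd_add a pd_zero)
    apply (rule cls_eqI[where K = "I"])
    using a E1 pd_add[OF pd_zero a] by auto
qed

lemma q_neg: assumes a: "(d, I) \<in> QP"
  shows "qadd A (cls d I) (qsmul A (-1) (cls d I)) = qzero A"
proof -
  note E1 = QP_E[OF a(1)]
  have p: "((\<lambda>x. d x \<oplus> d (-1 \<odot> x)), I \<inter> I) \<in> QP" using pd_add[OF a pd_smul[OF a]] .
  show ?thesis
    apply (simp add: qzero_cls qsmul_cls qadd_cls a pd_smul)
    apply (rule cls_eqI[where K = "I"])
    using a E1 pd_zero p PDerD(3)[OF E1(2)] by auto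
qed

lemma q_smul_one: assumes a: "(d, I) \<in> QP"
  shows "qsmul A 1 (cls d I) = cls d I"
proof -
  note E1 = QP_E[OF a(1)]
  show ?thesis
    apply (simp add: qsmul_cls a)
    apply (rule cls_eqI[where K = "I"])
    using a E1 pd_smul[OF a] by auto
qed

lemma q_smul_assoc: assumes a: "(d, I) \<in> QP"
  shows "qsmul A x (qsmul A y (cls d I)) = qsmul A (x * y) (cls d I)"
proof -
  note E1 = QP_E[OF a(1)]
  show ?thesis
    apply (simp add: qsmul_cls a pd_smul)
    apply (rule cls_eqI[where K = "I"])
    using a E1 pd_smul[OF pd_smul[OF a]] pd_smul[OF a] by (auto simp: smul_assoc mult.commute)
qed

lemma q_smul_ldist: assumes a: "(d, I) \<in> QP"
  shows "qsmul A (x + y) (cls d I) = qadd A (qsmul A x (cls d I)) (qsmul A y (cls d I))"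
proof -
  note E1 = QP_E[OF a(1)]
  show ?thesis
    apply (simp add: qsmul_cls qadd_cls a pd_smul)
    apply (rule cls_eqI[where K = "I"])
    using a E1 pd_smul[OF a] pd_add[OF pd_smul[OF a] pd_smul[OF a]]
      PDerD(2)[OF E1(2)] subspaceD(4)[OF E1(6)] by (auto simp: smul_ldist)
qed

lemma q_smul_rdist: assumes a: "(d, I) \<in> QP" "(m, J) \<in> QP"
  shows "qsmul A c (qadd A (cls d I) (cls m J)) = qadd A (qsmul A c (cls d I)) (qsmul A c (cls m J))"
  using a by (simp add: qsmul_cls qadd_cls pd_smul pd_add)

lemma Q_vspace: "vspace Q"
  unfolding vspace_def Q_simps
proof (intro conjI ballI allI)
  show "qzero A \<in> QP // QR" by (rule q_zero_in)
  fix x assume x: "x \<in> QP // QR"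
  { fix y assume y: "y \<in> QP // QR"
    show "qadd A x y \<in> QP // QR" using q_add_in x y .
    show "qadd A x y = qadd A y x" using x y by (elim Qcases) (simp add: q_add_comm)
    fix z assume z: "z \<in> QP // QR"
    show "qadd A (qadd A x y) z = qadd A x (qadd A y z)" using x y z by (elim Qcases) (simp add: q_add_assoc) }
  { fix y assume y: "y \<in> QP // QR"
    fix c show "qsmul A c (qadd A x y) = qadd A (qsmul A c x) (qsmul A c y)"
      using x y by (elim Qcases) (simp add: q_smul_rdist) }
  fix c
  show "qsmul A c x \<in> QP // QR" using q_smul_in x .
  show "qadd A (qzero A) x = x" using x by (elim Qcases) (simp add: q_zero_l)
  show "qadd A x (qsmul A (-1) x) = qzero A" using x by (elim Qcases) (simp add: q_neg)
  show "qsmul A 1 x = x" using x by (elim Qcases) (simp add: q_smul_one)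
  fix b
  show "qsmul A (c * b) x = qsmul A c (qsmul A b x)" using x by (elim Qcases) (simp add: q_smul_assoc)
  show "qsmul A (c + b) x = qadd A (qsmul A c x) (qsmul A b x)" using x by (elim Qcases) (simp add: q_smul_ldist)
qed


lemma q_br_addl: assumes a: "(d, I) \<in> QP" "(m, J) \<in> QP" "(n, M) \<in> QP"
  shows "qbr A (qadd A (cls d I) (cls m J)) (cls n M) = qadd A (qbr A (cls d I) (cls n M)) (qbr A (cls m J) (cls n M))"
proof -
  note E1 = QP_E[OF a(1)] and E2 = QP_E[OF a(2)] and E3 = QP_E[OF a(3)]
  let ?N = "I \<inter> J \<inter> M"
  have N: "essential A ?N" using ess_Int[OF ess_Int[OF E1(1) E2(1)] E3(1)] .
  have NI: "ideal A ?N" using ess_ideal[OF N] .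
  have NN: "\<And>x. x \<in> ?N \<Longrightarrow> x \<in> C" using ideal_mem[OF NI] .
  show ?thesis
    apply (simp add: qbr_cls qadd_cls pd_add pd_br a)
    apply (rule cls_eqI[where K = "isq A ?N"])
         apply (rule pd_br[OF pd_add[OF a(1,2)] a(3)])
        apply (rule pd_add[OF pd_br[OF a(1,3)] pd_br[OF a(2,3)]])
       apply (rule ess_isq[OF N])
      apply (rule isq_mono[OF NI ess_ideal[OF ess_Int[OF ess_Int[OF E1(1) E2(1)] E3(1)]]]; blast)
  proof -
    have "isq A ?N \<subseteq> isq A (I \<inter> M)" by (rule isq_mono[OF NI ess_ideal[OF ess_Int[OF E1(1) E3(1)]]]; blast)
    moreover have "isq A ?N \<subseteq> isq A (J \<inter> M)" by (rule isq_mono[OF NI ess_ideal[OF ess_Int[OF E2(1) E3(1)]]]; blast)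
    ultimately show "isq A ?N \<subseteq> isq A (I \<inter> M) \<inter> isq A (J \<inter> M)" by blast
  next
    fix x assume x: "x \<in> isq A ?N"
    have xN: "x \<in> ?N" using isq_mem[OF NI x] .
    have dx: "d x \<in> ?N" using pder_isq[OF E1(2) NI _ x] by blast
    have mx: "m x \<in> ?N" using pder_isq[OF E2(2) NI _ x] by blast
    have nx: "n x \<in> ?N" using pder_isq[OF E3(2) NI _ x] by blast
    have c: "n (d x) \<in> C" "n (m x) \<in> C" "d (n x) \<in> C" "m (n x) \<in> C"
      using E1(5) E2(5) E3(5) dx mx nx by auto
    have "n (d x \<oplus> m x) = n (d x) \<oplus> n (m x)" using PDerD(2)[OF E3(2)] dx mx by auto
    thus "n (d x \<oplus> m x) \<ominus> (d (n x) \<oplus> m (n x)) = n (d x) \<ominus> d (n x) \<oplus> (n (m x) \<ominus> m (n x))"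
      using c by (simp add: sub_add_sub)
  qed
qed

lemma q_br_addr: assumes a: "(d, I) \<in> QP" "(m, J) \<in> QP" "(n, M) \<in> QP"
  shows "qbr A (cls d I) (qadd A (cls m J) (cls n M)) = qadd A (qbr A (cls d I) (cls m J)) (qbr A (cls d I) (cls n M))"
proof -
  note E1 = QP_E[OF a(1)] and E2 = QP_E[OF a(2)] and E3 = QP_E[OF a(3)]
  let ?N = "I \<inter> J \<inter> M"
  have N: "essential A ?N" using ess_Int[OF ess_Int[OF E1(1) E2(1)] E3(1)] .
  have NI: "ideal A ?N" using ess_ideal[OF N] .
  show ?thesis
    apply (simp add: qbr_cls qadd_cls pd_add pd_br a)
    apply (rule cls_eqI[where K = "isq A ?N"])
         apply (rule pd_br[OF a(1) pd_add[OF a(2,3)]])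
        apply (rule pd_add[OF pd_br[OF a(1,2)] pd_br[OF a(1,3)]])
       apply (rule ess_isq[OF N])
      apply (rule isq_mono[OF NI ess_ideal[OF ess_Int[OF E1(1) ess_Int[OF E2(1) E3(1)]]]]; blast)
  proof -
    have "isq A ?N \<subseteq> isq A (I \<inter> J)" by (rule isq_mono[OF NI ess_ideal[OF ess_Int[OF E1(1) E2(1)]]]; blast)
    moreover have "isq A ?N \<subseteq> isq A (I \<inter> M)" by (rule isq_mono[OF NI ess_ideal[OF ess_Int[OF E1(1) E3(1)]]]; blast)
    ultimately show "isq A ?N \<subseteq> isq A (I \<inter> J) \<inter> isq A (I \<inter> M)" by blast
  next
    fix x assume x: "x \<in> isq A ?N"
    have xN: "x \<in> ?N" using isq_mem[OF NI x] .
    have dx: "d x \<in> ?N" using pder_isq[OF E1(2) NI _ x] by blast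
    have mx: "m x \<in> ?N" using pder_isq[OF E2(2) NI _ x] by blast
    have nx: "n x \<in> ?N" using pder_isq[OF E3(2) NI _ x] by blast
    have c: "m (d x) \<in> C" "n (d x) \<in> C" "d (m x) \<in> C" "d (n x) \<in> C"
      using E1(5) E2(5) E3(5) dx mx nx by auto
    have "d (m x \<oplus> n x) = d (m x) \<oplus> d (n x)" using PDerD(2)[OF E1(2)] mx nx by auto
    thus "m (d x) \<oplus> n (d x) \<ominus> d (m x \<oplus> n x) = m (d x) \<ominus> d (m x) \<oplus> (n (d x) \<ominus> d (n x))"
      using c by (simp add: sub_add_sub)
  qed
qed

lemma q_br_smull: assumes a: "(d, I) \<in> QP" "(m, J) \<in> QP"
  shows "qbr A (qsmul A c (cls d I)) (cls m J) = qsmul A c (qbr A (cls d I) (cls m J))"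
proof -
  note E1 = QP_E[OF a(1)] and E2 = QP_E[OF a(2)]
  let ?N = "I \<inter> J"
  have N: "essential A ?N" using ess_Int[OF E1(1) E2(1)] .
  have NI: "ideal A ?N" using ess_ideal[OF N] .
  show ?thesis
    apply (simp add: qbr_cls qsmul_cls pd_smul pd_br a)
    apply (rule cls_eqI[where K = "isq A ?N"])
    using pd_br[OF pd_smul[OF a(1)] a(2)] pd_smul[OF pd_br[OF a]] ess_isq[OF N] apply blast+
    using isq_mem[OF NI] PDerD(3)[OF E2(2)] by auto
qed

lemma q_br_smulr: assumes a: "(d, I) \<in> QP" "(m, J) \<in> QP"
  shows "qbr A (cls d I) (qsmul A c (cls m J)) = qsmul A c (qbr A (cls d I) (cls m J))"
proof -
  note E1 = QP_E[OF a(1)] and E2 = QP_E[OF a(2)]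
  let ?N = "I \<inter> J"
  have N: "essential A ?N" using ess_Int[OF E1(1) E2(1)] .
  have NI: "ideal A ?N" using ess_ideal[OF N] .
  show ?thesis
    apply (simp add: qbr_cls qsmul_cls pd_smul pd_br a)
    apply (rule cls_eqI[where K = "isq A ?N"])
    using pd_br[OF a(1) pd_smul[OF a(2)]] pd_smul[OF pd_br[OF a]] ess_isq[OF N] apply blast+
    using isq_mem[OF NI] PDerD(3)[OF E1(2)] by auto
qed

lemma Q_lsub: "lsub Q p q = qadd A p (qsmul A (-1) q)" by (simp add: lsub_def Q_simps)

lemma q_jacobi: assumes a: "(d, I) \<in> QP" "(m, J) \<in> QP" "(n, M) \<in> QP"
  shows "qbr A (cls d I) (qbr A (cls m J) (cls n M)) =
    qadd A (qbr A (qbr A (cls d I) (cls m J)) (cls n M)) (qsmul A (-1) (qbr A (qbr A (cls d I) (cls n M)) (cls m J)))"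
proof -
  note E1 = QP_E[OF a(1)] and E2 = QP_E[OF a(2)] and E3 = QP_E[OF a(3)]
  let ?N = "I \<inter> J \<inter> M"
  have N: "essential A ?N" using ess_Int[OF ess_Int[OF E1(1) E2(1)] E3(1)] .
  have NI: "ideal A ?N" using ess_ideal[OF N] .
  let ?N1 = "isq A ?N"
  have N1: "essential A ?N1" using ess_isq[OF N] .
  have N1I: "ideal A ?N1" using ess_ideal[OF N1] .
  let ?N2 = "isq A ?N1"
  have N2: "essential A ?N2" using ess_isq[OF N1] .
  have N2I: "ideal A ?N2" using ess_ideal[OF N2] .
  let ?K = "isq A ?N2"
  have K: "essential A ?K" using ess_isq[OF N2] .
  have KI: "ideal A ?K" using ess_ideal[OF K] .
  have s21: "?N2 \<subseteq> ?N1" using isq_sub[OF N1I] .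
  have s10: "?N1 \<subseteq> ?N" using isq_sub[OF NI] .
  have sK2: "?K \<subseteq> ?N2" using isq_sub[OF N2I] .
  have JM: "essential A (J \<inter> M)" using ess_Int[OF E2(1) E3(1)] .
  have IJ: "essential A (I \<inter> J)" using ess_Int[OF E1(1) E2(1)] .
  have IM: "essential A (I \<inter> M)" using ess_Int[OF E1(1) E3(1)] .
  have pJM: "((\<lambda>x. n (m x) \<ominus> m (n x)), isq A (J \<inter> M)) \<in> QP" using pd_br[OF a(2,3)] .
  have pIJ: "((\<lambda>x. m (d x) \<ominus> d (m x)), isq A (I \<inter> J)) \<in> QP" using pd_br[OF a(1,2)] .
  have pIM: "((\<lambda>x. n (d x) \<ominus> d (n x)), isq A (I \<inter> M)) \<in> QP" using pd_br[OF a(1,3)] .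
  note pL = pd_br[OF a(1) pJM]
  note pR1 = pd_br[OF pIJ a(3)]
  note pR2 = pd_br[OF pIM a(2)]
  note pR = pd_add[OF pR1 pd_smul[OF pR2]]
  have dom1: "?N1 \<subseteq> isq A (J \<inter> M)" by (rule isq_mono[OF NI ess_ideal[OF JM]]; blast)
  have dom2: "?N1 \<subseteq> isq A (I \<inter> J)" by (rule isq_mono[OF NI ess_ideal[OF IJ]]; blast)
  have dom3: "?N1 \<subseteq> isq A (I \<inter> M)" by (rule isq_mono[OF NI ess_ideal[OF IM]]; blast)
  have KL: "?K \<subseteq> isq A (I \<inter> isq A (J \<inter> M))"
    by (rule isq_mono[OF N2I ess_ideal[OF ess_Int[OF E1(1) ess_isq[OF JM]]]]) (use s21 s10 dom1 in blast)
  have KR1: "?K \<subseteq> isq A (isq A (I \<inter> J) \<inter> M)"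
    by (rule isq_mono[OF N2I ess_ideal[OF ess_Int[OF ess_isq[OF IJ] E3(1)]]]) (use s21 s10 dom2 in blast)
  have KR2: "?K \<subseteq> isq A (isq A (I \<inter> M) \<inter> J)"
    by (rule isq_mono[OF N2I ess_ideal[OF ess_Int[OF ess_isq[OF IM] E2(1)]]]) (use s21 s10 dom3 in blast)
  show ?thesis
    apply (simp add: qbr_cls a pJM pIJ pIM)
    apply (simp add: qsmul_cls[OF pR2])
    apply (simp add: qadd_cls[OF pR1 pd_smul[OF pR2]])
    apply (rule cls_eqI[where K = "?K"])
    using pL pR K KL KR1 KR2 apply blast+
  proof -
    fix x assume x: "x \<in> ?K"
    have x2: "x \<in> ?N2" using x sK2 by blast
    have a1: "d x \<in> ?N2" "m x \<in> ?N2" "n x \<in> ?N2"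
      using pder_isq[OF E1(2) N2I _ x] pder_isq[OF E2(2) N2I _ x] pder_isq[OF E3(2) N2I _ x] s21 s10 by blast+
    have a2: "m (d x) \<in> ?N1" "n (d x) \<in> ?N1" "d (m x) \<in> ?N1" "n (m x) \<in> ?N1" "d (n x) \<in> ?N1" "m (n x) \<in> ?N1"
      using pder_isq[OF E1(2) N1I] pder_isq[OF E2(2) N1I] pder_isq[OF E3(2) N1I] a1 s10 by blast+
    have a3: "n (m (d x)) \<in> C" "m (n (d x)) \<in> C" "n (d (m x)) \<in> C" "d (n (m x)) \<in> C" "m (d (n x)) \<in> C" "d (m (n x)) \<in> C"
      using E1(5) E2(5) E3(5) a2 s10 by blast+
    have a2C: "m (d x) \<in> C" "n (d x) \<in> C" "d (m x) \<in> C" "n (m x) \<in> C" "d (n x) \<in> C" "m (n x) \<in> C"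
      using a2 s10 E1(4) by blast+
    have xR2: "x \<in> isq A (isq A (I \<inter> M) \<inter> J)" using x KR2 by blast
    have e1: "d (n (m x) \<ominus> m (n x)) = d (n (m x)) \<ominus> d (m (n x))"
      using PDer_sub[OF E1(2) E1(6)] a2 s10 by blast
    have e2: "n (m (d x) \<ominus> d (m x)) = n (m (d x)) \<ominus> n (d (m x))"
      using PDer_sub[OF E3(2) E3(6)] a2 s10 by blast
    have e3: "m (n (d x) \<ominus> d (n x)) = m (n (d x)) \<ominus> m (d (n x))"
      using PDer_sub[OF E2(2) E2(6)] a2 s10 by blast
    have e4: "(\<lambda>x. m (n (d x) \<ominus> d (n x)) \<ominus> (n (d (m x)) \<ominus> d (n (m x)))) (-1 \<odot> x)
        = ng (m (n (d x) \<ominus> d (n x)) \<ominus> (n (d (m x)) \<ominus> d (n (m x))))"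
      using PDerD(3)[OF QP_E(2)[OF pR2] xR2] by simp
    show "n (m (d x)) \<ominus> m (n (d x)) \<ominus> d (n (m x) \<ominus> m (n x)) =
          n (m (d x) \<ominus> d (m x)) \<ominus> (m (d (n x)) \<ominus> d (m (n x))) \<oplus>
          (m (n (d (-1 \<odot> x)) \<ominus> d (n (-1 \<odot> x))) \<ominus> (n (d (m (-1 \<odot> x))) \<ominus> d (n (m (-1 \<odot> x)))))"
      using e4 apply simp
      unfolding e1 e2 e3 using a3
      by (simp add: sub_norm sub_eq_sub_iff add_ac)
  qed
qed

lemma Q_leibniz: "leibniz Q"
  unfolding leibniz_def
proof (intro conjI ballI allI)
  show "vspace Q" by (rule Q_vspace)
  fix x y assume x: "x \<in> lcar Q" and y: "y \<in> lcar Q"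
  show "lbr Q x y \<in> lcar Q" using x y q_br_in by (simp add: Q_simps)
  fix c
  show "lbr Q (lsmul Q c x) y = lsmul Q c (lbr Q x y)"
    using x y by (simp add: Q_simps) (elim Qcases, simp add: q_br_smull)
  show "lbr Q x (lsmul Q c y) = lsmul Q c (lbr Q x y)"
    using x y by (simp add: Q_simps) (elim Qcases, simp add: q_br_smulr)
next
  fix x y z assume x: "x \<in> lcar Q" and y: "y \<in> lcar Q" and z: "z \<in> lcar Q"
  show "lbr Q (ladd Q x y) z = ladd Q (lbr Q x z) (lbr Q y z)"
    using x y z by (simp add: Q_simps) (elim Qcases, simp add: q_br_addl)
  show "lbr Q x (ladd Q y z) = ladd Q (lbr Q x y) (lbr Q x z)"
    using x y z by (simp add: Q_simps) (elim Qcases, simp add: q_br_addr)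
  show "lbr Q x (lbr Q y z) = lsub Q (lbr Q (lbr Q x y) z) (lbr Q (lbr Q x z) y)"
    using x y z unfolding Q_lsub by (simp add: Q_simps) (elim Qcases, simp add: q_jacobi)
qed

end

context leib begin
lemma sub_add_self: "u \<in> C \<Longrightarrow> v \<in> C \<Longrightarrow> u \<ominus> (u \<oplus> v) = ng v"
  by (simp add: sub_def' neg_add)
lemma add_sub_self: "u \<in> C \<Longrightarrow> v \<in> C \<Longrightarrow> (u \<oplus> v) \<ominus> u = v"
  using eq_sub_iff[of v "u \<oplus> v" u] add_comm[of u v] by simp
lemma isq_subC: "ideal A I \<Longrightarrow> isq A I \<subseteq> C" using isq_sub idealD(2) by blast

lemma PDer_cong: assumes d: "PDer A I d" and sI: "ideal A I" and eq: "\<And>x. x \<in> I \<Longrightarrow> d x = g x"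
  shows "PDer A I g"
  unfolding PDer_def
proof (intro conjI ballI allI)
  fix x assume x: "x \<in> I"
  show "g x \<in> C" using PDerD(1)[OF d x] eq[OF x] by simp
  fix c show "g (c \<odot> x) = c \<odot> g x"
    using PDerD(3)[OF d x] eq[OF x] eq[OF idealD(5)[OF sI x]] by simp
next
  fix x y assume x: "x \<in> I" and y: "y \<in> I"
  show "g (x \<oplus> y) = g x \<oplus> g y"
    using PDerD(2)[OF d x y] eq[OF x] eq[OF y] eq[OF idealD(4)[OF sI x y]] by simp
  show "g (x \<star> y) = g x \<star> y \<oplus> x \<star> g y"
    using PDerD(4)[OF d x y] eq[OF x] eq[OF y] eq[OF idealD(6)[OF sI x ideal_mem[OF sI y]]] by simp
qed
end

context sp begin

abbreviation ph where "ph x \<equiv> phi A x"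

lemma phi_cls: "ph x = cls (\<lambda>y. y \<star> x) C" unfolding phi_def ..

lemma phi_in: "x \<in> C \<Longrightarrow> ph x \<in> QP // QR"
  unfolding phi_cls by (rule cls_in[OF pd_R])

lemma phi_add: assumes "x \<in> C" "y \<in> C" shows "ph (x \<oplus> y) = qadd A (ph x) (ph y)"
  unfolding phi_cls qadd_cls[OF pd_R[OF assms(1)] pd_R[OF assms(2)]]
  apply (rule cls_eqI[where K = C])
  using pd_R assms pd_add[OF pd_R[OF assms(1)] pd_R[OF assms(2)]] ess_C by (auto simp: br_addr)

lemma phi_smul: assumes "x \<in> C" shows "ph (c \<odot> x) = qsmul A c (ph x)"
  unfolding phi_cls qsmul_cls[OF pd_R[OF assms(1)]]
  apply (rule cls_eqI[where K = C])
  using pd_R assms pd_smul[OF pd_R[OF assms(1)]] ess_C by (auto simp: br_smulr br_smull)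

lemma phi_zero: "ph \<zero> = qzero A"
  unfolding phi_cls qzero_cls
  apply (rule cls_eqI[where K = C])
  using pd_R pd_zero ess_C by auto

lemma phi_br: assumes x: "x \<in> C" and y: "y \<in> C" shows "ph (x \<star> y) = qbr A (ph x) (ph y)"
  unfolding phi_cls qbr_cls[OF pd_R[OF x] pd_R[OF y]]
proof (rule cls_eqI[where K = "isq A (C \<inter> C)"])
  show "((\<lambda>z. z \<star> (x \<star> y)), C) \<in> QP" using pd_R[OF br_closed[OF x y]] .
  show "((\<lambda>z. z \<star> x \<star> y \<ominus> z \<star> y \<star> x), isq A (C \<inter> C)) \<in> QP" using pd_br[OF pd_R[OF x] pd_R[OF y]] by simp
  show "essential A (isq A (C \<inter> C))" using ess_isq[OF ess_Int[OF ess_C ess_C]] .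
  show "isq A (C \<inter> C) \<subseteq> C" using isq_subC[OF ideal_C] by simp
  show "isq A (C \<inter> C) \<subseteq> isq A (C \<inter> C)" by simp
  fix z assume "z \<in> isq A (C \<inter> C)"
  hence z: "z \<in> C" using isq_sub[OF ideal_C] by auto
  show "z \<star> (x \<star> y) = z \<star> x \<star> y \<ominus> z \<star> y \<star> x" by (rule jac[OF z x y])
qed

lemma phi_inj: assumes x: "x \<in> C" and y: "y \<in> C" and eq: "ph x = ph y" shows "x = y"
proof -
  have "\<forall>z\<in>C. z \<star> (x \<ominus> y) = \<zero>"
  proof
    fix z assume z: "z \<in> C"
    have "z \<star> x = z \<star> y" using cls_eqD[OF pd_R[OF x] pd_R[OF y] eq[unfolded phi_cls] z z] .
    thus "z \<star> (x \<ominus> y) = \<zero>" using z x y by (simp add: br_subr)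
  qed
  hence "x \<ominus> y = \<zero>" using left_ann_zero x y by simp
  thus ?thesis using sub_eq0 x y by blast
qed

lemma phi_nz: "x \<in> C \<Longrightarrow> ph x = qzero A \<Longrightarrow> x = \<zero>"
  using phi_inj[of x "\<zero>"] phi_zero by simp

lemma qbr_phi_l: assumes gI: "(g, I) \<in> QP" and a: "a \<in> I"
  shows "qbr A (ph a) (cls g I) = ph (g a)"
proof -
  note E = QP_E[OF gI]
  have aC: "a \<in> C" using E(4) a .
  have gaC: "g a \<in> C" using E(5) a .
  have IC: "C \<inter> I = I" using E(4) by blast
  show ?thesis
    unfolding phi_cls qbr_cls[OF pd_R[OF aC] gI]
  proof (rule cls_eqI[where K = "isq A (C \<inter> I)"])
    show "((\<lambda>x. g (x \<star> a) \<ominus> g x \<star> a), isq A (C \<inter> I)) \<in> QP" using pd_br[OF pd_R[OF aC] gI] by simp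
    show "((\<lambda>y. y \<star> g a), C) \<in> QP" using pd_R[OF gaC] .
    show "essential A (isq A (C \<inter> I))" using ess_isq[OF ess_Int[OF ess_C E(1)]] .
    show "isq A (C \<inter> I) \<subseteq> isq A (C \<inter> I)" by simp
    show "isq A (C \<inter> I) \<subseteq> C" using isq_subC[OF E(3)] IC by simp
    fix x assume "x \<in> isq A (C \<inter> I)"
    hence x: "x \<in> I" using isq_sub[OF E(3)] IC by auto
    have "g (x \<star> a) = g x \<star> a \<oplus> x \<star> g a" using PDerD(4)[OF E(2) x a] .
    thus "g (x \<star> a) \<ominus> g x \<star> a = x \<star> g a" using add_sub_self E x gaC aC by simp
  qed
qed

lemma qbr_phi_r: assumes gI: "(g, I) \<in> QP" and a: "a \<in> I"
  shows "qbr A (cls g I) (ph a) = ph (ng (g a))"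
proof -
  note E = QP_E[OF gI]
  have aC: "a \<in> C" using E(4) a .
  have gaC: "g a \<in> C" using E(5) a .
  have IC: "I \<inter> C = I" using E(4) by blast
  show ?thesis
    unfolding phi_cls qbr_cls[OF gI pd_R[OF aC]]
  proof (rule cls_eqI[where K = "isq A (I \<inter> C)"])
    show "((\<lambda>x. g x \<star> a \<ominus> g (x \<star> a)), isq A (I \<inter> C)) \<in> QP" using pd_br[OF gI pd_R[OF aC]] by simp
    show "((\<lambda>y. y \<star> ng (g a)), C) \<in> QP" using pd_R[OF smul_closed[OF gaC]] .
    show "essential A (isq A (I \<inter> C))" using ess_isq[OF ess_Int[OF E(1) ess_C]] .
    show "isq A (I \<inter> C) \<subseteq> isq A (I \<inter> C)" by simp
    show "isq A (I \<inter> C) \<subseteq> C" using isq_subC[OF E(3)] IC by simp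
    fix x assume "x \<in> isq A (I \<inter> C)"
    hence x: "x \<in> I" using isq_sub[OF E(3)] IC by auto
    have "g (x \<star> a) = g x \<star> a \<oplus> x \<star> g a" using PDerD(4)[OF E(2) x a] .
    thus "g x \<star> a \<ominus> g (x \<star> a) = x \<star> ng (g a)" using sub_add_self E x gaC aC by (simp add: br_smulr)
  qed
qed

lemma cls_nz: assumes gI: "(g, I) \<in> QP" and nz: "cls g I \<noteq> qzero A" and J: "essential A J"
  shows "\<exists>a\<in>I \<inter> J. g a \<noteq> \<zero>"
proof (rule ccontr)
  assume "\<not> ?thesis"
  hence h: "\<forall>a\<in>I \<inter> J. g a = \<zero>" by blast
  have "cls g I = qzero A" unfolding qzero_cls
    apply (rule cls_eqI[where K = "I \<inter> J"])
    using gI pd_zero ess_Int[OF QP_E(1)[OF gI] J] h QP_E(4)[OF gI] by auto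
  thus False using nz by simp
qed

lemma Q_semiprime: "semiprime Q"
  unfolding semiprime_def
proof (intro allI impI)
  fix II assume h: "ideal Q II \<and> II \<noteq> {lzero Q}"
  have II: "ideal Q II" using h by blast
  interpret Ql: leib Q by (unfold_locales) (rule Q_leibniz)
  have IIC: "II \<subseteq> QP // QR" using Ql.idealD(2)[OF II] by (simp add: Q_simps)
  obtain q where q: "q \<in> II" "q \<noteq> qzero A" using h Ql.idealD(3)[OF II] by (auto simp: Q_simps)
  obtain g I where gI: "(g, I) \<in> QP" "q = cls g I" using q IIC by (metis Qcases subsetD)
  obtain a where a: "a \<in> I" "g a \<noteq> \<zero>" using cls_nz[OF gI(1) _ ess_C] q gI by auto
  note E = QP_E[OF gI(1)]
  have aC: "a \<in> C" using E(4) a by blast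
  have gaC: "g a \<in> C" using E(5) a by blast
  have "ph (g a) \<in> II" using qbr_phi_l[OF gI(1) a(1)] Ql.idealD(7)[OF II q(1), of "ph a"] phi_in[OF aC] gI
    by (simp add: Q_simps)
  let ?J = "{z \<in> C. ph z \<in> II}"
  have Ji: "ideal A ?J" unfolding ideal_def subspace_def
  proof (intro conjI ballI allI)
    show "?J \<subseteq> C" by auto
    show "\<zero> \<in> ?J" using phi_zero Ql.idealD(3)[OF II] by (simp add: Q_simps)
  next
    fix x y assume "x \<in> ?J" "y \<in> ?J"
    thus "x \<oplus> y \<in> ?J" using phi_add Ql.idealD(4)[OF II] by (simp add: Q_simps)
  next
    fix c x assume "x \<in> ?J"
    thus "c \<odot> x \<in> ?J" using phi_smul Ql.idealD(5)[OF II] by (simp add: Q_simps)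
  next
    fix x y assume x: "x \<in> ?J" and y: "y \<in> C"
    show "x \<star> y \<in> ?J" using x y phi_br Ql.idealD(6)[OF II] phi_in by (simp add: Q_simps)
    show "y \<star> x \<in> ?J" using x y phi_br Ql.idealD(7)[OF II] phi_in by (simp add: Q_simps)
  qed
  show "{lbr Q x y |x y. x \<in> II \<and> y \<in> II} \<noteq> {lzero Q}"
  proof
    assume pz: "{lbr Q x y |x y. x \<in> II \<and> y \<in> II} = {lzero Q}"
    have "\<forall>x\<in>?J. \<forall>y\<in>?J. x \<star> y = \<zero>"
    proof (intro ballI)
      fix x y assume x: "x \<in> ?J" and y: "y \<in> ?J"
      have "lbr Q (ph x) (ph y) \<in> {lbr Q x y |x y. x \<in> II \<and> y \<in> II}" using x y by blast
      hence "lbr Q (ph x) (ph y) \<in> {lzero Q}" unfolding pz .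
      hence "qbr A (ph x) (ph y) = qzero A" by (simp add: Q_simps)
      hence "ph (x \<star> y) = qzero A" using phi_br x y by simp
      thus "x \<star> y = \<zero>" using phi_nz x y by simp
    qed
    hence "?J = {\<zero>}" using semiprimeD[OF Ji] by blast
    moreover have "g a \<in> ?J" using gaC \<open>ph (g a) \<in> II\<close> by blast
    ultimately show False using a by blast
  qed
qed


lemma pd_neg: assumes gI: "(g, I) \<in> QP" shows "((\<lambda>y. ng (g y)), I) \<in> QP"
proof -
  note E = QP_E[OF gI]
  have "PDer A I (\<lambda>y. g (-1 \<odot> y))" using pd_smul[OF gI] by (simp add: QP_iff)
  hence "PDer A I (\<lambda>y. ng (g y))" by (rule PDer_cong[OF _ E(3)]) (use PDerD(3)[OF E(2)] in simp)
  thus ?thesis using E(1) by (simp add: QP_iff)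
qed

lemma pd_commR: assumes gI: "(g, I) \<in> QP" and z: "z \<in> C"
  shows "((\<lambda>y. g y \<star> z \<ominus> g (y \<star> z)), I) \<in> QP"
proof -
  note E = QP_E[OF gI]
  have yz: "\<And>y. y \<in> I \<Longrightarrow> y \<star> z \<in> I" using idealD(6)[OF E(3)] z by blast
  show ?thesis unfolding QP_iff PDer_def
  proof (intro conjI ballI allI)
    show "essential A I" by (rule E(1))
    fix x assume x: "x \<in> I"
    have c: "g x \<in> C" "g (x \<star> z) \<in> C" using E(5) x yz by auto
    thus "g x \<star> z \<ominus> g (x \<star> z) \<in> C" using z by simp
    fix c
    have "c \<odot> x \<in> I" using idealD(5)[OF E(3) x] .
    thus "g (c \<odot> x) \<star> z \<ominus> g (c \<odot> x \<star> z) = c \<odot> (g x \<star> z \<ominus> g (x \<star> z))"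
      using PDerD(3)[OF E(2)] x yz c z E(4) by (simp add: br_smull smul_sub)
  next
    fix x y assume x: "x \<in> I" and y: "y \<in> I"
    have xC: "x \<in> C" "y \<in> C" using E(4) x y by auto
    have c: "g x \<in> C" "g (x \<star> z) \<in> C" "g y \<in> C" "g (y \<star> z) \<in> C" using E(5) x y yz by auto
    show "g (x \<oplus> y) \<star> z \<ominus> g ((x \<oplus> y) \<star> z) = g x \<star> z \<ominus> g (x \<star> z) \<oplus> (g y \<star> z \<ominus> g (y \<star> z))"
      using PDerD(2)[OF E(2)] x y yz c z xC by (simp add: br_addl sub_add_sub)
    have xz: "x \<star> z \<in> I" "y \<star> z \<in> I" using yz x y by auto
    have i1: "x \<star> (y \<star> z) \<in> I" "(x \<star> z) \<star> y \<in> I"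
      using idealD(6)[OF E(3) x] idealD(6)[OF E(3) xz(1)] xC z by auto
    have "g ((x \<star> y) \<star> z) = g (x \<star> (y \<star> z) \<oplus> (x \<star> z) \<star> y)" using jac2[OF xC z] by simp
    also have "\<dots> = g (x \<star> (y \<star> z)) \<oplus> g ((x \<star> z) \<star> y)" using PDerD(2)[OF E(2) i1] .
    also have "\<dots> = (g x \<star> (y \<star> z) \<oplus> x \<star> g (y \<star> z)) \<oplus> (g (x \<star> z) \<star> y \<oplus> (x \<star> z) \<star> g y)"
      using PDerD(4)[OF E(2)] x y xz by simp
    finally have e1: "g ((x \<star> y) \<star> z) = (g x \<star> (y \<star> z) \<oplus> x \<star> g (y \<star> z)) \<oplus> (g (x \<star> z) \<star> y \<oplus> (x \<star> z) \<star> g y)" .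
    have "g (x \<star> y) \<star> z = (g x \<star> y \<oplus> x \<star> g y) \<star> z" using PDerD(4)[OF E(2) x y] by simp
    also have "\<dots> = (g x \<star> y) \<star> z \<oplus> (x \<star> g y) \<star> z" using c xC z by (simp add: br_addl)
    also have "\<dots> = (g x \<star> (y \<star> z) \<oplus> (g x \<star> z) \<star> y) \<oplus> (x \<star> (g y \<star> z) \<oplus> (x \<star> z) \<star> g y)"
      using jac2[OF c(1) xC(2) z] jac2[OF xC(1) c(3) z] by simp
    finally have e2: "g (x \<star> y) \<star> z = (g x \<star> (y \<star> z) \<oplus> (g x \<star> z) \<star> y) \<oplus> (x \<star> (g y \<star> z) \<oplus> (x \<star> z) \<star> g y)" .
    show "g (x \<star> y) \<star> z \<ominus> g (x \<star> y \<star> z) = (g x \<star> z \<ominus> g (x \<star> z)) \<star> y \<oplus> x \<star> (g y \<star> z \<ominus> g (y \<star> z))"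
      unfolding e1 e2 using c xC z by (simp add: br_subl br_subr sub_norm sub_eq_sub_iff add_ac)
  qed
qed

lemma pd_commL: assumes gI: "(g, I) \<in> QP" and z: "z \<in> C"
  shows "((\<lambda>y. g (y \<star> z) \<ominus> g y \<star> z), I) \<in> QP"
proof -
  note E = QP_E[OF gI]
  have yz: "\<And>y. y \<in> I \<Longrightarrow> y \<star> z \<in> I" using idealD(6)[OF E(3)] z by blast
  have "PDer A I (\<lambda>y. ng (g y \<star> z \<ominus> g (y \<star> z)))" using pd_neg[OF pd_commR[OF gI z]] by (simp add: QP_iff)
  hence "PDer A I (\<lambda>y. g (y \<star> z) \<ominus> g y \<star> z)"
    by (rule PDer_cong[OF _ E(3)]) (use E(5) yz z in \<open>simp add: neg_sub\<close>)
  thus ?thesis using E(1) by (simp add: QP_iff)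
qed

lemma assoc_T: assumes f: "f \<in> assoc_gen Q (ph ` C)"
  shows "(g, I) \<in> QP \<Longrightarrow> \<exists>g'. (g', I) \<in> QP \<and> f (cls g I) = cls g' I"
  using f
proof (induction arbitrary: g rule: assoc_gen.induct)
  case (gen_R x)
  then obtain z where z: "z \<in> C" "x = ph z" by blast
  note E = QP_E[OF gen_R(2)]
  have IC: "I \<inter> C = I" using E(4) by blast
  have "lbr Q (cls g I) x = cls (\<lambda>y. g y \<star> z \<ominus> g (y \<star> z)) (isq A (I \<inter> C))"
    using z qbr_cls[OF gen_R(2) pd_R[OF z(1)]] by (simp add: Q_simps phi_cls)
  also have "\<dots> = cls (\<lambda>y. g y \<star> z \<ominus> g (y \<star> z)) I"
    apply (rule cls_eqI[where K = "isq A (I \<inter> C)"])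
    using pd_br[OF gen_R(2) pd_R[OF z(1)]] pd_commR[OF gen_R(2) z(1)] ess_isq[OF ess_Int[OF E(1) ess_C]]
      isq_sub[OF E(3)] IC by auto
  finally show ?case using pd_commR[OF gen_R(2) z(1)] by blast
next
  case (gen_L x)
  then obtain z where z: "z \<in> C" "x = ph z" by blast
  note E = QP_E[OF gen_L(2)]
  have IC: "C \<inter> I = I" using E(4) by blast
  have "lbr Q x (cls g I) = cls (\<lambda>y. g (y \<star> z) \<ominus> g y \<star> z) (isq A (C \<inter> I))"
    using z qbr_cls[OF pd_R[OF z(1)] gen_L(2)] by (simp add: Q_simps phi_cls)
  also have "\<dots> = cls (\<lambda>y. g (y \<star> z) \<ominus> g y \<star> z) I"
    apply (rule cls_eqI[where K = "isq A (C \<inter> I)"])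
    using pd_br[OF pd_R[OF z(1)] gen_L(2)] pd_commL[OF gen_L(2) z(1)] ess_isq[OF ess_Int[OF ess_C E(1)]]
      isq_sub[OF E(3)] IC by auto
  finally show ?case using pd_commL[OF gen_L(2) z(1)] by blast
next
  case (gen_add f1 f2)
  obtain g1 where g1: "(g1, I) \<in> QP" "f1 (cls g I) = cls g1 I" using gen_add.IH(1)[OF gen_add.prems] by blast
  obtain g2 where g2: "(g2, I) \<in> QP" "f2 (cls g I) = cls g2 I" using gen_add.IH(2)[OF gen_add.prems] by blast
  have "ladd Q (f1 (cls g I)) (f2 (cls g I)) = cls (\<lambda>x. g1 x \<oplus> g2 x) I"
    using qadd_cls[OF g1(1) g2(1)] g1 g2 by (simp add: Q_simps)
  moreover have "((\<lambda>x. g1 x \<oplus> g2 x), I) \<in> QP" using pd_add[OF g1(1) g2(1)] by simp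
  ultimately show ?case by auto
next
  case (gen_smul f1 c)
  obtain g1 where g1: "(g1, I) \<in> QP" "f1 (cls g I) = cls g1 I" using gen_smul.IH[OF gen_smul.prems] by blast
  have "lsmul Q c (f1 (cls g I)) = cls (\<lambda>y. g1 (c \<odot> y)) I"
    using qsmul_cls[OF g1(1)] g1 by (simp add: Q_simps)
  thus ?case using pd_smul[OF g1(1)] by auto
next
  case (gen_comp f1 f2)
  obtain g2 where g2: "(g2, I) \<in> QP" "f2 (cls g I) = cls g2 I" using gen_comp.IH(2)[OF gen_comp.prems] by blast
  obtain g1 where g1: "(g1, I) \<in> QP" "f1 (cls g2 I) = cls g1 I" using gen_comp.IH(1)[OF g2(1)] by blast
  show ?case using g1 g2 by auto
qed

lemma gen_sub_T: assumes gI: "(g, I) \<in> QP" and u: "u \<in> gen_sub Q (ph ` C) (cls g I)"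
  shows "\<exists>g'. (g', I) \<in> QP \<and> u = cls g' I"
proof -
  obtain c xi where u: "u = ladd Q (lsmul Q c (cls g I)) (xi (cls g I))" and xi: "xi \<in> assoc_gen Q (ph ` C)"
    using u unfolding gen_sub_def by blast
  obtain g1 where g1: "(g1, I) \<in> QP" "xi (cls g I) = cls g1 I" using assoc_T[OF xi gI] by blast
  have "u = cls (\<lambda>x. g (c \<odot> x) \<oplus> g1 x) I"
    using u g1 qsmul_cls[OF gI] qadd_cls[OF pd_smul[OF gI] g1(1)] by (simp add: Q_simps)
  thus ?thesis using pd_add[OF pd_smul[OF gI] g1(1)] by auto
qed

lemma colon_phi: assumes gI: "(g, I) \<in> QP" and a: "a \<in> I"
  shows "ph a \<in> colon Q (ph ` C) (cls g I)"
  unfolding colon_def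
proof (intro CollectI conjI ballI)
  note E = QP_E[OF gI]
  show "ph a \<in> ph ` C" using E(4) a by blast
  fix u assume "u \<in> gen_sub Q (ph ` C) (cls g I)"
  then obtain g' where g': "(g', I) \<in> QP" "u = cls g' I" using gen_sub_T[OF gI] by blast
  show "lbr Q (ph a) u \<in> ph ` C" using qbr_phi_l[OF g'(1) a] g' QP_E(5)[OF g'(1) a] by (simp add: Q_simps)
  show "lbr Q u (ph a) \<in> ph ` C" using qbr_phi_r[OF g'(1) a] g' QP_E(5)[OF g'(1) a] by (simp add: Q_simps)
qed

lemma Q_aoq: "alg_of_quotients Q (ph ` C)"
  unfolding alg_of_quotients_def
proof (intro conjI ballI impI)
  show "leibniz Q" by (rule Q_leibniz)
  show "subalgebra Q (ph ` C)" unfolding subalgebra_def subspace_def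
  proof (intro conjI ballI allI)
    show "ph ` C \<subseteq> lcar Q" using phi_in by (auto simp: Q_simps)
    show "lzero Q \<in> ph ` C" using phi_zero zero_closed by (auto simp: Q_simps intro!: image_eqI[where x = "\<zero>"])
  next
    fix x y assume "x \<in> ph ` C" "y \<in> ph ` C"
    then obtain a b where ab: "a \<in> C" "b \<in> C" "x = ph a" "y = ph b" by blast
    show "ladd Q x y \<in> ph ` C" using phi_add[OF ab(1,2)] ab by (auto simp: Q_simps intro!: image_eqI[where x = "a \<oplus> b"])
    show "lbr Q x y \<in> ph ` C" using phi_br[OF ab(1,2)] ab by (auto simp: Q_simps intro!: image_eqI[where x = "a \<star> b"])
  next
    fix c x assume "x \<in> ph ` C"
    then obtain a where ab: "a \<in> C" "x = ph a" by blast
    show "lsmul Q c x \<in> ph ` C" using phi_smul[OF ab(1)] ab by (auto simp: Q_simps intro!: image_eqI[where x = "c \<odot> a"])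
  qed
  fix p q assume p: "p \<in> lcar Q" and q: "q \<in> lcar Q" and pnz: "p \<noteq> lzero Q"
  obtain g I where gI: "(g, I) \<in> QP" "q = cls g I" using q by (auto simp: Q_simps elim: Qcases)
  obtain e M where eM: "(e, M) \<in> QP" "p = cls e M" using p by (auto simp: Q_simps elim: Qcases)
  obtain a where a: "a \<in> M \<inter> I" "e a \<noteq> \<zero>" using cls_nz[OF eM(1) _ QP_E(1)[OF gI(1)]] pnz eM by (auto simp: Q_simps)
  have col: "ph a \<in> colon Q (ph ` C) q" using colon_phi[OF gI(1)] a gI by auto
  have eaC: "e a \<in> C" using QP_E(5)[OF eM(1)] a by blast
  have "lbr Q p (ph a) = ph (ng (e a))" using qbr_phi_r[OF eM(1)] a eM by (simp add: Q_simps)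
  moreover have "ph (ng (e a)) \<noteq> lzero Q"
  proof
    assume "ph (ng (e a)) = lzero Q"
    hence "ng (e a) = \<zero>" using phi_nz eaC by (simp add: Q_simps)
    hence "ng (ng (e a)) = \<zero>" by simp
    thus False using a eaC by simp
  qed
  ultimately show "(\<exists>x\<in>colon Q (ph ` C) q. lbr Q x p \<noteq> lzero Q) \<or> (\<exists>y\<in>colon Q (ph ` C) q. lbr Q p y \<noteq> lzero Q)"
    using col by metis
qed

end

locale qs = sp A for A :: "('f::field, 'a) lalg" +
  fixes S :: "('f, 's) lalg" and emb :: "'a \<Rightarrow> 's"
  assumes mono: "lmono A S emb" and aoq: "alg_of_quotients S (emb ` lcar A)"
begin

lemma Sl: "leib S" using aoq unfolding alg_of_quotients_def leib_def by blast

abbreviation SC where "SC \<equiv> lcar S"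
abbreviation E where "E \<equiv> emb ` C"

lemmas S_add_closed = leib.add_closed[OF Sl]
lemmas S_smul_closed = leib.smul_closed[OF Sl]
lemmas S_br_closed = leib.br_closed[OF Sl]
lemmas S_zero_closed = leib.zero_closed[OF Sl]
lemmas S_sub_closed = leib.sub_closed[OF Sl]
lemmas S_br_addl = leib.br_addl[OF Sl]
lemmas S_br_addr = leib.br_addr[OF Sl]
lemmas S_br_smull = leib.br_smull[OF Sl]
lemmas S_br_smulr = leib.br_smulr[OF Sl]
lemmas S_jac = leib.jac[OF Sl]
lemmas S_jac2 = leib.jac2[OF Sl]
lemmas S_zero_l = leib.zero_l[OF Sl]
lemmas S_zero_r = leib.zero_r[OF Sl]
lemmas S_smul_zero_l = leib.smul_zero_l[OF Sl]
lemmas S_smul_one = leib.smul_one[OF Sl]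
lemmas S_br_zero_l = leib.br_zero_l[OF Sl]
lemmas S_br_zero_r = leib.br_zero_r[OF Sl]

lemma emb_C: "x \<in> C \<Longrightarrow> emb x \<in> SC" using mono unfolding lmono_def lhom_def by blast
lemma emb_add: "x \<in> C \<Longrightarrow> y \<in> C \<Longrightarrow> emb (x \<oplus> y) = ladd S (emb x) (emb y)"
  using mono unfolding lmono_def lhom_def by blast
lemma emb_smul: "x \<in> C \<Longrightarrow> emb (c \<odot> x) = lsmul S c (emb x)"
  using mono unfolding lmono_def lhom_def by blast
lemma emb_br: "x \<in> C \<Longrightarrow> y \<in> C \<Longrightarrow> emb (x \<star> y) = lbr S (emb x) (emb y)"
  using mono unfolding lmono_def lhom_def by blast
lemma emb_inj: "x \<in> C \<Longrightarrow> y \<in> C \<Longrightarrow> emb x = emb y \<Longrightarrow> x = y"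
  using mono unfolding lmono_def inj_on_def by blast
lemma emb_zero: "emb \<zero> = lzero S"
proof -
  have "emb \<zero> = emb (0 \<odot> \<zero>)" by simp
  also have "\<dots> = lsmul S 0 (emb \<zero>)" by (rule emb_smul[OF zero_closed])
  also have "\<dots> = lzero S" using S_smul_zero_l emb_C by simp
  finally show ?thesis .
qed
lemma emb_sub: "x \<in> C \<Longrightarrow> y \<in> C \<Longrightarrow> emb (x \<ominus> y) = lsub S (emb x) (emb y)"
  by (simp add: lsub_def emb_add emb_smul)

lemma E_sub: "E \<subseteq> SC" using emb_C by blast
lemma E_add: assumes "a \<in> E" "b \<in> E" shows "ladd S a b \<in> E"
proof -
  obtain x y where "x \<in> C" "y \<in> C" "a = emb x" "b = emb y" using assms by blast
  hence "ladd S a b = emb (x \<oplus> y)" "x \<oplus> y \<in> C" using emb_add by auto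
  thus ?thesis by blast
qed
lemma E_smul: assumes "a \<in> E" shows "lsmul S c a \<in> E"
proof -
  obtain x where "x \<in> C" "a = emb x" using assms by blast
  hence "lsmul S c a = emb (c \<odot> x)" "c \<odot> x \<in> C" using emb_smul by auto
  thus ?thesis by blast
qed
lemma E_br: assumes "a \<in> E" "b \<in> E" shows "lbr S a b \<in> E"
proof -
  obtain x y where "x \<in> C" "y \<in> C" "a = emb x" "b = emb y" using assms by blast
  hence "lbr S a b = emb (x \<star> y)" "x \<star> y \<in> C" using emb_br by auto
  thus ?thesis by blast
qed
lemma E_sub': "a \<in> E \<Longrightarrow> b \<in> E \<Longrightarrow> lsub S a b \<in> E" unfolding lsub_def using E_add E_smul by blast
lemma E_zero: "lzero S \<in> E" using emb_zero zero_closed by (metis image_eqI)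

definition iv where "iv y = inv_into C emb y"
lemma iv_C: "y \<in> E \<Longrightarrow> iv y \<in> C" unfolding iv_def by (rule inv_into_into)
lemma emb_iv: "y \<in> E \<Longrightarrow> emb (iv y) = y" unfolding iv_def by (rule f_inv_into_f)
lemma iv_emb: "x \<in> C \<Longrightarrow> iv (emb x) = x" unfolding iv_def using mono unfolding lmono_def by (simp add: inv_into_f_f)

lemma assoc_carrier: "f \<in> assoc_gen S E \<Longrightarrow> u \<in> SC \<Longrightarrow> f u \<in> SC"
  by (induction arbitrary: u rule: assoc_gen.induct)
     (use E_sub in \<open>auto simp: S_br_closed S_add_closed S_smul_closed\<close>)

lemma gs_carrier: assumes s: "s \<in> SC" and u: "u \<in> gen_sub S E s" shows "u \<in> SC"
  using u unfolding gen_sub_def using assoc_carrier s S_add_closed S_smul_closed by auto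

lemma gs_self: assumes s: "s \<in> SC" shows "s \<in> gen_sub S E s"
proof -
  have e0: "emb \<zero> \<in> E" by simp
  have xi: "(\<lambda>u. lsmul S 0 (lbr S u (emb \<zero>))) \<in> assoc_gen S E" by (rule gen_smul[OF gen_R[OF e0]])
  have "ladd S (lsmul S 1 s) (lsmul S 0 (lbr S s (emb \<zero>))) = s"
    using s emb_C[OF zero_closed] S_br_closed S_smul_one S_smul_zero_l S_zero_r by simp
  thus ?thesis unfolding gen_sub_def using xi by (metis (mono_tags, lifting) mem_Collect_eq)
qed

lemma gs_L: assumes s: "s \<in> SC" and y: "y \<in> E" and u: "u \<in> gen_sub S E s"
  shows "lbr S y u \<in> gen_sub S E s"
proof -
  obtain c xi where u': "u = ladd S (lsmul S c s) (xi s)" and xi: "xi \<in> assoc_gen S E"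
    using u unfolding gen_sub_def by blast
  have yC: "y \<in> SC" using y E_sub by blast
  have xs: "xi s \<in> SC" using assoc_carrier[OF xi s] .
  let ?xi = "\<lambda>v. ladd S (lsmul S c (lbr S y v)) (((\<lambda>v. lbr S y v) \<circ> xi) v)"
  have xi': "?xi \<in> assoc_gen S E" by (rule gen_add[OF gen_smul[OF gen_L[OF y]] gen_comp[OF gen_L[OF y] xi]])
  have "lbr S y u = ?xi s" unfolding u' using yC s xs by (simp add: S_br_addr S_br_smulr S_smul_closed)
  also have "\<dots> = ladd S (lsmul S 0 s) (?xi s)"
    using s yC xs by (simp add: S_smul_zero_l S_zero_l S_br_closed S_add_closed S_smul_closed)
  finally have eq: "lbr S y u = ladd S (lsmul S 0 s) (?xi s)" .
  show ?thesis unfolding gen_sub_def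
    apply (rule CollectI) apply (rule exI[of _ 0]) apply (rule exI[of _ ?xi])
    using eq xi' by simp
qed

lemma gs_R: assumes s: "s \<in> SC" and y: "y \<in> E" and u: "u \<in> gen_sub S E s"
  shows "lbr S u y \<in> gen_sub S E s"
proof -
  obtain c xi where u': "u = ladd S (lsmul S c s) (xi s)" and xi: "xi \<in> assoc_gen S E"
    using u unfolding gen_sub_def by blast
  have yC: "y \<in> SC" using y E_sub by blast
  have xs: "xi s \<in> SC" using assoc_carrier[OF xi s] .
  let ?xi = "\<lambda>v. ladd S (lsmul S c (lbr S v y)) (((\<lambda>v. lbr S v y) \<circ> xi) v)"
  have xi': "?xi \<in> assoc_gen S E" by (rule gen_add[OF gen_smul[OF gen_R[OF y]] gen_comp[OF gen_R[OF y] xi]])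
  have "lbr S u y = ?xi s" unfolding u' using yC s xs by (simp add: S_br_addl S_br_smull S_smul_closed)
  also have "\<dots> = ladd S (lsmul S 0 s) (?xi s)"
    using s yC xs by (simp add: S_smul_zero_l S_zero_l S_br_closed S_add_closed S_smul_closed)
  finally have eq: "lbr S u y = ladd S (lsmul S 0 s) (?xi s)" .
  show ?thesis unfolding gen_sub_def
    apply (rule CollectI) apply (rule exI[of _ 0]) apply (rule exI[of _ ?xi])
    using eq xi' by simp
qed

definition D where "D s = {x \<in> C. emb x \<in> colon S E s}"

lemma D_iff: "x \<in> D s \<longleftrightarrow> x \<in> C \<and> (\<forall>u\<in>gen_sub S E s. lbr S (emb x) u \<in> E \<and> lbr S u (emb x) \<in> E)"
  unfolding D_def colon_def by auto

lemma D_ideal: assumes s: "s \<in> SC" shows "ideal A (D s)"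
  unfolding ideal_def subspace_def
proof (intro conjI ballI allI)
  show "D s \<subseteq> C" unfolding D_def by auto
  show "\<zero> \<in> D s" unfolding D_iff using emb_zero gs_carrier[OF s] S_br_zero_l S_br_zero_r E_zero by simp
next
  fix x y assume x: "x \<in> D s" and y: "y \<in> D s"
  have xC: "x \<in> C" "y \<in> C" using x y D_iff by auto
  show "x \<oplus> y \<in> D s" unfolding D_iff
  proof (intro conjI ballI)
    show "x \<oplus> y \<in> C" using xC by simp
    fix u assume u: "u \<in> gen_sub S E s"
    have uC: "u \<in> SC" using gs_carrier[OF s u] .
    show "lbr S (emb (x \<oplus> y)) u \<in> E" using x y u xC uC emb_C D_iff E_add by (simp add: emb_add S_br_addl)
    show "lbr S u (emb (x \<oplus> y)) \<in> E" using x y u xC uC emb_C D_iff E_add by (simp add: emb_add S_br_addr)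
  qed
next
  fix c x assume x: "x \<in> D s"
  have xC: "x \<in> C" using x D_iff by auto
  show "c \<odot> x \<in> D s" unfolding D_iff
  proof (intro conjI ballI)
    show "c \<odot> x \<in> C" using xC by simp
    fix u assume u: "u \<in> gen_sub S E s"
    have uC: "u \<in> SC" using gs_carrier[OF s u] .
    show "lbr S (emb (c \<odot> x)) u \<in> E" using x u xC uC emb_C D_iff E_smul by (simp add: emb_smul S_br_smull)
    show "lbr S u (emb (c \<odot> x)) \<in> E" using x u xC uC emb_C D_iff E_smul by (simp add: emb_smul S_br_smulr)
  qed
next
  fix x y assume x: "x \<in> D s" and y: "y \<in> C"
  have xC: "x \<in> C" using x D_iff by auto
  have ex: "emb x \<in> SC" "emb y \<in> SC" "emb y \<in> E" using emb_C xC y by auto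
  show "x \<star> y \<in> D s" unfolding D_iff
  proof (intro conjI ballI)
    show "x \<star> y \<in> C" using xC y by simp
    fix u assume u: "u \<in> gen_sub S E s"
    have uC: "u \<in> SC" using gs_carrier[OF s u] .
    have yu: "lbr S (emb y) u \<in> gen_sub S E s" "lbr S u (emb y) \<in> gen_sub S E s"
      using gs_L[OF s ex(3) u] gs_R[OF s ex(3) u] by auto
    have a1: "lbr S (emb x) (lbr S (emb y) u) \<in> E" "lbr S (lbr S u (emb y)) (emb x) \<in> E"
      using x yu D_iff by auto
    have a2: "lbr S (emb x) u \<in> E" "lbr S u (emb x) \<in> E" using x u D_iff by auto
    have "lbr S (emb (x \<star> y)) u = ladd S (lbr S (emb x) (lbr S (emb y) u)) (lbr S (lbr S (emb x) u) (emb y))"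
      using emb_br[OF xC y] S_jac2[OF ex(1,2) uC] by simp
    thus "lbr S (emb (x \<star> y)) u \<in> E" using a1 a2 E_add E_br ex(3) by simp
    have "lbr S u (emb (x \<star> y)) = lsub S (lbr S (lbr S u (emb x)) (emb y)) (lbr S (lbr S u (emb y)) (emb x))"
      using emb_br[OF xC y] S_jac[OF uC ex(1,2)] by simp
    thus "lbr S u (emb (x \<star> y)) \<in> E" using a1 a2 E_sub' E_br ex(3) by simp
  qed
  show "y \<star> x \<in> D s" unfolding D_iff
  proof (intro conjI ballI)
    show "y \<star> x \<in> C" using xC y by simp
    fix u assume u: "u \<in> gen_sub S E s"
    have uC: "u \<in> SC" using gs_carrier[OF s u] .
    have yu: "lbr S (emb y) u \<in> gen_sub S E s" "lbr S u (emb y) \<in> gen_sub S E s"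
      using gs_L[OF s ex(3) u] gs_R[OF s ex(3) u] by auto
    have a1: "lbr S (lbr S (emb y) u) (emb x) \<in> E" "lbr S (lbr S u (emb y)) (emb x) \<in> E"
      using x yu D_iff by auto
    have a2: "lbr S (emb x) u \<in> E" "lbr S u (emb x) \<in> E" using x u D_iff by auto
    have "lbr S (emb (y \<star> x)) u = ladd S (lbr S (emb y) (lbr S (emb x) u)) (lbr S (lbr S (emb y) u) (emb x))"
      using emb_br[OF y xC] S_jac2[OF ex(2,1) uC] by simp
    thus "lbr S (emb (y \<star> x)) u \<in> E" using a1 a2 E_add E_br ex(3) by simp
    have "lbr S u (emb (y \<star> x)) = lsub S (lbr S (lbr S u (emb y)) (emb x)) (lbr S (lbr S u (emb x)) (emb y))"
      using emb_br[OF y xC] S_jac[OF uC ex(2,1)] by simp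
    thus "lbr S u (emb (y \<star> x)) \<in> E" using a1 a2 E_sub' E_br ex(3) by simp
  qed
qed

lemma aoqD: assumes "p \<in> SC" "q \<in> SC" "p \<noteq> lzero S"
  shows "(\<exists>x\<in>colon S E q. lbr S x p \<noteq> lzero S) \<or> (\<exists>y\<in>colon S E q. lbr S p y \<noteq> lzero S)"
  using aoq assms unfolding alg_of_quotients_def by blast

lemma colon_D: "x \<in> colon S E s \<Longrightarrow> \<exists>a\<in>D s. x = emb a"
  unfolding colon_def D_def by auto

lemma D_ess: assumes s: "s \<in> SC" shows "essential A (D s)"
  unfolding essential_def
proof (intro conjI allI impI)
  show DI: "ideal A (D s)" using D_ideal[OF s] .
  fix J assume J: "ideal A J \<and> J \<noteq> {\<zero>}"
  then obtain j where j: "j \<in> J" "j \<noteq> \<zero>" using ideal_nz by blast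
  have jC: "j \<in> C" using ideal_mem J j by blast
  have ej: "emb j \<in> SC" "emb j \<noteq> lzero S" using emb_C[OF jC] emb_inj[OF jC zero_closed] emb_zero j by auto
  show "D s \<inter> J \<noteq> {\<zero>}"
  proof
    assume DJ: "D s \<inter> J = {\<zero>}"
    from aoqD[OF ej(1) s ej(2)] show False
    proof
      assume "\<exists>x\<in>colon S E s. lbr S x (emb j) \<noteq> lzero S"
      then obtain a where a: "a \<in> D s" "lbr S (emb a) (emb j) \<noteq> lzero S" using colon_D by blast
      have aC: "a \<in> C" using a D_iff by auto
      have "a \<star> j \<in> D s \<inter> J" using idealD(6)[OF DI a(1) jC] idealD(7)[of J j a] J j aC by blast
      hence "a \<star> j = \<zero>" using DJ by blast
      thus False using a emb_br[OF aC jC] emb_zero by simp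
    next
      assume "\<exists>x\<in>colon S E s. lbr S (emb j) x \<noteq> lzero S"
      then obtain a where a: "a \<in> D s" "lbr S (emb j) (emb a) \<noteq> lzero S" using colon_D by blast
      have aC: "a \<in> C" using a D_iff by auto
      have "j \<star> a \<in> D s \<inter> J" using idealD(7)[OF DI a(1) jC] idealD(6)[of J j a] J j aC by blast
      hence "j \<star> a = \<zero>" using DJ by blast
      thus False using a emb_br[OF jC aC] emb_zero by simp
    qed
  qed
qed


lemmas S_add_comm = leib.add_comm[OF Sl]
lemmas S_anti_left = leib.anti_left[OF Sl]
lemmas S_br_subl = leib.br_subl[OF Sl]
lemmas S_br_subr = leib.br_subr[OF Sl]
lemmas S_sub_self = leib.sub_self[OF Sl]
lemmas S_sub_eq0 = leib.sub_eq0[OF Sl]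

abbreviation Rs where "Rs s \<equiv> (\<lambda>x. iv (lbr S (emb x) s))"

lemma psi_eq: "psi A S emb s = cls (Rs s) (D s)"
  unfolding psi_def D_def iv_def ..

lemma DC: "x \<in> D s \<Longrightarrow> x \<in> C" unfolding D_def by auto

lemma Rs_E: assumes s: "s \<in> SC" and x: "x \<in> D s" shows "lbr S (emb x) s \<in> E"
  using x gs_self[OF s] unfolding D_iff by blast

lemma Rs_C: "s \<in> SC \<Longrightarrow> x \<in> D s \<Longrightarrow> Rs s x \<in> C" using Rs_E iv_C by blast
lemma emb_Rs: "s \<in> SC \<Longrightarrow> x \<in> D s \<Longrightarrow> emb (Rs s x) = lbr S (emb x) s" using Rs_E emb_iv by blast

lemma pd_psi: assumes s: "s \<in> SC" shows "(Rs s, D s) \<in> QP"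
  unfolding QP_iff PDer_def
proof (intro conjI ballI allI)
  have DI: "ideal A (D s)" using D_ideal[OF s] .
  show "essential A (D s)" using D_ess[OF s] .
  fix x assume x: "x \<in> D s"
  have xC: "x \<in> C" using DC x .
  show "Rs s x \<in> C" using Rs_C[OF s x] .
  fix c
  have cx: "c \<odot> x \<in> D s" using idealD(5)[OF DI x] .
  have "emb (Rs s (c \<odot> x)) = emb (c \<odot> Rs s x)"
    using emb_Rs[OF s cx] emb_Rs[OF s x] emb_smul[OF xC] emb_smul[OF Rs_C[OF s x]] S_br_smull emb_C[OF xC] s
    by simp
  thus "Rs s (c \<odot> x) = c \<odot> Rs s x" using emb_inj Rs_C[OF s cx] Rs_C[OF s x] by simp
next
  have DI: "ideal A (D s)" using D_ideal[OF s] .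
  fix x y assume x: "x \<in> D s" and y: "y \<in> D s"
  have xC: "x \<in> C" "y \<in> C" using DC x y by auto
  have rc: "Rs s x \<in> C" "Rs s y \<in> C" using Rs_C[OF s] x y by auto
  have ec: "emb x \<in> SC" "emb y \<in> SC" using emb_C xC by auto
  have xy: "x \<oplus> y \<in> D s" "x \<star> y \<in> D s" using idealD(4)[OF DI x y] idealD(6)[OF DI x xC(2)] by auto
  have "emb (Rs s (x \<oplus> y)) = emb (Rs s x \<oplus> Rs s y)"
    using emb_Rs[OF s xy(1)] emb_Rs[OF s x] emb_Rs[OF s y] emb_add xC rc S_br_addl ec s by simp
  thus "Rs s (x \<oplus> y) = Rs s x \<oplus> Rs s y" using emb_inj Rs_C[OF s xy(1)] rc by simp
  have "emb (Rs s (x \<star> y)) = ladd S (lbr S (emb x) (lbr S (emb y) s)) (lbr S (lbr S (emb x) s) (emb y))"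
    using emb_Rs[OF s xy(2)] emb_br[OF xC] S_jac2[OF ec s] by simp
  also have "\<dots> = emb (Rs s x \<star> y \<oplus> x \<star> Rs s y)"
    using emb_Rs[OF s x] emb_Rs[OF s y] emb_add emb_br xC rc S_add_comm S_br_closed ec s by simp
  finally show "Rs s (x \<star> y) = Rs s x \<star> y \<oplus> x \<star> Rs s y"
    using emb_inj Rs_C[OF s xy(2)] rc xC by simp
qed

lemma psi_in: "s \<in> SC \<Longrightarrow> psi A S emb s \<in> QP // QR"
  unfolding psi_eq by (rule cls_in[OF pd_psi])

lemma psi_add: assumes s: "s \<in> SC" and t: "t \<in> SC"
  shows "psi A S emb (ladd S s t) = qadd A (psi A S emb s) (psi A S emb t)"
proof -
  have st: "ladd S s t \<in> SC" using S_add_closed s t .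
  let ?K = "D (ladd S s t) \<inter> (D s \<inter> D t)"
  show ?thesis
    unfolding psi_eq qadd_cls[OF pd_psi[OF s] pd_psi[OF t]]
  proof (rule cls_eqI[where K = ?K])
    show "(Rs (ladd S s t), D (ladd S s t)) \<in> QP" using pd_psi[OF st] .
    show "((\<lambda>x. Rs s x \<oplus> Rs t x), D s \<inter> D t) \<in> QP" using pd_add[OF pd_psi[OF s] pd_psi[OF t]] .
    show "essential A ?K" using ess_Int[OF D_ess[OF st] ess_Int[OF D_ess[OF s] D_ess[OF t]]] .
    show "?K \<subseteq> D (ladd S s t)" "?K \<subseteq> D s \<inter> D t" by auto
    fix x assume x: "x \<in> ?K"
    hence xs: "x \<in> D (ladd S s t)" "x \<in> D s" "x \<in> D t" by auto
    have xC: "x \<in> C" using DC xs(2) .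
    have "emb (Rs (ladd S s t) x) = emb (Rs s x \<oplus> Rs t x)"
      using emb_Rs[OF st xs(1)] emb_Rs[OF s xs(2)] emb_Rs[OF t xs(3)] emb_add Rs_C[OF s xs(2)] Rs_C[OF t xs(3)]
        S_br_addr emb_C[OF xC] s t by simp
    thus "Rs (ladd S s t) x = Rs s x \<oplus> Rs t x" using emb_inj Rs_C[OF st xs(1)] Rs_C[OF s xs(2)] Rs_C[OF t xs(3)] by simp
  qed
qed

lemma psi_smul: assumes s: "s \<in> SC"
  shows "psi A S emb (lsmul S c s) = qsmul A c (psi A S emb s)"
proof -
  have cs: "lsmul S c s \<in> SC" using S_smul_closed s .
  let ?K = "D (lsmul S c s) \<inter> D s"
  show ?thesis
    unfolding psi_eq qsmul_cls[OF pd_psi[OF s]]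
  proof (rule cls_eqI[where K = ?K])
    show "(Rs (lsmul S c s), D (lsmul S c s)) \<in> QP" using pd_psi[OF cs] .
    show "((\<lambda>y. Rs s (c \<odot> y)), D s) \<in> QP" using pd_smul[OF pd_psi[OF s]] .
    show "essential A ?K" using ess_Int[OF D_ess[OF cs] D_ess[OF s]] .
    show "?K \<subseteq> D (lsmul S c s)" "?K \<subseteq> D s" by auto
    fix x assume x: "x \<in> ?K"
    hence xs: "x \<in> D (lsmul S c s)" "x \<in> D s" by auto
    have xC: "x \<in> C" using DC xs(2) .
    have cx: "c \<odot> x \<in> D s" using idealD(5)[OF D_ideal[OF s] xs(2)] .
    have "emb (Rs (lsmul S c s) x) = emb (Rs s (c \<odot> x))"
      using emb_Rs[OF cs xs(1)] emb_Rs[OF s cx] emb_smul[OF xC] S_br_smull S_br_smulr emb_C[OF xC] s by simp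
    thus "Rs (lsmul S c s) x = Rs s (c \<odot> x)" using emb_inj Rs_C[OF cs xs(1)] Rs_C[OF s cx] by simp
  qed
qed

lemma psi_br: assumes s: "s \<in> SC" and t: "t \<in> SC"
  shows "psi A S emb (lbr S s t) = qbr A (psi A S emb s) (psi A S emb t)"
proof -
  have st: "lbr S s t \<in> SC" using S_br_closed s t .
  let ?N = "D s \<inter> D t \<inter> D (lbr S s t)"
  have N: "essential A ?N" using ess_Int[OF ess_Int[OF D_ess[OF s] D_ess[OF t]] D_ess[OF st]] .
  have NI: "ideal A ?N" using ess_ideal[OF N] .
  have Dst: "essential A (D s \<inter> D t)" using ess_Int[OF D_ess[OF s] D_ess[OF t]] .
  show ?thesis
    unfolding psi_eq qbr_cls[OF pd_psi[OF s] pd_psi[OF t]]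
  proof (rule cls_eqI[where K = "isq A ?N"])
    show "(Rs (lbr S s t), D (lbr S s t)) \<in> QP" using pd_psi[OF st] .
    show "((\<lambda>x. Rs t (Rs s x) \<ominus> Rs s (Rs t x)), isq A (D s \<inter> D t)) \<in> QP"
      using pd_br[OF pd_psi[OF s] pd_psi[OF t]] .
    show "essential A (isq A ?N)" using ess_isq[OF N] .
    show "isq A ?N \<subseteq> D (lbr S s t)" using isq_sub[OF NI] by blast
    show "isq A ?N \<subseteq> isq A (D s \<inter> D t)" by (rule isq_mono[OF NI ess_ideal[OF Dst]]) blast
    fix x assume x: "x \<in> isq A ?N"
    have xN: "x \<in> ?N" using isq_mem[OF NI x] .
    have xC: "x \<in> C" using DC xN by blast
    have r1: "Rs s x \<in> ?N" using pder_isq[OF QP_E(2)[OF pd_psi[OF s]] NI _ x] by blast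
    have r2: "Rs t x \<in> ?N" using pder_isq[OF QP_E(2)[OF pd_psi[OF t]] NI _ x] by blast
    have c: "Rs t (Rs s x) \<in> C" "Rs s (Rs t x) \<in> C" using Rs_C s t r1 r2 by auto
    have e1: "emb (Rs t (Rs s x)) = lbr S (lbr S (emb x) s) t"
      using emb_Rs[OF t, of "Rs s x"] emb_Rs[OF s, of x] r1 xN by simp
    have e2: "emb (Rs s (Rs t x)) = lbr S (lbr S (emb x) t) s"
      using emb_Rs[OF s, of "Rs t x"] emb_Rs[OF t, of x] r2 xN by simp
    have "emb (Rs t (Rs s x) \<ominus> Rs s (Rs t x)) = lsub S (lbr S (lbr S (emb x) s) t) (lbr S (lbr S (emb x) t) s)"
      using emb_sub[OF c] e1 e2 by simp
    also have "\<dots> = lbr S (emb x) (lbr S s t)"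
      using S_jac[OF emb_C[OF xC] s t] by simp
    also have "\<dots> = emb (Rs (lbr S s t) x)"
      using emb_Rs[OF st, of x] xN by simp
    finally have ee: "emb (Rs t (Rs s x) \<ominus> Rs s (Rs t x)) = emb (Rs (lbr S s t) x)" .
    have x3: "x \<in> D (lbr S s t)" using xN by blast
    show "Rs (lbr S s t) x = Rs t (Rs s x) \<ominus> Rs s (Rs t x)"
      using emb_inj[OF sub_closed[OF c] Rs_C[OF st x3] ee] by simp
  qed
qed

lemma psi_emb: assumes x: "x \<in> C" shows "psi A S emb (emb x) = ph x"
  unfolding psi_eq phi_cls
proof (rule cls_eqI[where K = "D (emb x)"])
  have ex: "emb x \<in> SC" using emb_C[OF x] .
  show "(Rs (emb x), D (emb x)) \<in> QP" using pd_psi[OF ex] .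
  show "((\<lambda>y. y \<star> x), C) \<in> QP" using pd_R[OF x] .
  show "essential A (D (emb x))" using D_ess[OF ex] .
  show "D (emb x) \<subseteq> D (emb x)" "D (emb x) \<subseteq> C" using DC by auto
  fix y assume y: "y \<in> D (emb x)"
  have yC: "y \<in> C" using DC y .
  show "Rs (emb x) y = y \<star> x" using emb_br[OF yC x, symmetric] iv_emb[OF br_closed[OF yC x]] by simp
qed

lemma psi_inj: assumes s: "s \<in> SC" and t: "t \<in> SC" and eq: "psi A S emb s = psi A S emb t"
  shows "s = t"
proof (rule ccontr)
  assume ne: "s \<noteq> t"
  let ?p = "lsub S s t"
  have p: "?p \<in> SC" using S_sub_closed s t .
  have pnz: "?p \<noteq> lzero S" using S_sub_eq0 s t ne by blast
  let ?K = "D s \<inter> D t"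
  have K: "essential A ?K" using ess_Int[OF D_ess[OF s] D_ess[OF t]] .
  have KI: "ideal A ?K" using ess_ideal[OF K] .
  have Kp: "\<And>k. k \<in> ?K \<Longrightarrow> lbr S (emb k) ?p = lzero S"
  proof -
    fix k assume k: "k \<in> ?K"
    have kC: "k \<in> C" using DC k by blast
    have "Rs s k = Rs t k" using cls_eqD[OF pd_psi[OF s] pd_psi[OF t] eq[unfolded psi_eq]] k by blast
    hence "lbr S (emb k) s = lbr S (emb k) t" using emb_Rs s t k by (metis IntD1 IntD2)
    thus "lbr S (emb k) ?p = lzero S" using S_br_subr[OF emb_C[OF kC] s t] S_sub_self[OF S_br_closed[OF emb_C[OF kC] t]] by simp
  qed
  have gp: "?p \<in> gen_sub S E ?p" using gs_self[OF p] .
  from aoqD[OF p p pnz] show False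
  proof
    assume "\<exists>x\<in>colon S E ?p. lbr S x ?p \<noteq> lzero S"
    then obtain a where a: "a \<in> D ?p" "lbr S (emb a) ?p \<noteq> lzero S" using colon_D by blast
    have aC: "a \<in> C" using DC a(1) .
    let ?b = "Rs ?p a"
    have b: "?b \<in> C" "emb ?b = lbr S (emb a) ?p" using Rs_C[OF p a(1)] emb_Rs[OF p a(1)] by auto
    have "\<forall>k\<in>?K. ?b \<star> k = \<zero>"
    proof
      fix k assume k: "k \<in> ?K"
      have kC: "k \<in> C" using DC k by blast
      have ak: "a \<star> k \<in> ?K" using idealD(7)[OF KI k aC] .
      have ea: "emb a \<in> SC" "emb k \<in> SC" using emb_C aC kC by auto
      have z1: "lbr S (lbr S (emb a) (emb k)) ?p = lzero S" using Kp[OF ak] emb_br[OF aC kC] by simp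
      have "ladd S (lbr S (emb a) (lbr S ?p (emb k))) (lbr S (emb a) (lbr S (emb k) ?p)) = lzero S"
        using S_anti_left[OF ea(1) p ea(2)] .
      hence z2: "lbr S (emb a) (lbr S ?p (emb k)) = lzero S"
        using Kp[OF k] S_br_zero_r[OF ea(1)] S_zero_r S_br_closed ea p by simp
      have "emb (?b \<star> k) = lzero S"
        using emb_br[OF b(1) kC] b(2) S_jac2[OF ea(1) p ea(2)] z1 z2 S_zero_l S_zero_closed by simp
      thus "?b \<star> k = \<zero>" using emb_inj[OF br_closed[OF b(1) kC] zero_closed] emb_zero by simp
    qed
    hence "?b = \<zero>" using ann_ess[OF K b(1)] by blast
    thus False using a(2) b(2) emb_zero by simp
  next
    assume "\<exists>x\<in>colon S E ?p. lbr S ?p x \<noteq> lzero S"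
    then obtain a where a: "a \<in> D ?p" "lbr S ?p (emb a) \<noteq> lzero S" using colon_D by blast
    have aC: "a \<in> C" using DC a(1) .
    have gpa: "lbr S ?p (emb a) \<in> E" using a(1) gp unfolding D_iff by blast
    obtain b where b0: "b \<in> C" "lbr S ?p (emb a) = emb b" using gpa by (rule imageE)
    have b: "b \<in> C" "emb b = lbr S ?p (emb a)" using b0 by auto
    have "\<forall>k\<in>?K. k \<star> b = \<zero>"
    proof
      fix k assume k: "k \<in> ?K"
      have kC: "k \<in> C" using DC k by blast
      have ka: "k \<star> a \<in> ?K" using idealD(6)[OF KI k aC] .
      have ea: "emb a \<in> SC" "emb k \<in> SC" using emb_C aC kC by auto
      have z1: "lbr S (emb k) (lbr S (emb a) ?p) = lzero S"
        using S_jac[OF ea(2) ea(1) p] Kp[OF ka] Kp[OF k] emb_br[OF kC aC] S_br_zero_l ea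
          leib.sub_self[OF Sl, of "lzero S"] S_zero_closed by simp
      have "ladd S (lbr S (emb k) (lbr S ?p (emb a))) (lbr S (emb k) (lbr S (emb a) ?p)) = lzero S"
        using S_anti_left[OF ea(2) p ea(1)] .
      hence "lbr S (emb k) (lbr S ?p (emb a)) = lzero S" using z1 S_zero_r S_br_closed ea p by simp
      hence "emb (k \<star> b) = lzero S" using emb_br[OF kC b(1)] b(2) by simp
      thus "k \<star> b = \<zero>" using emb_inj[OF br_closed[OF kC b(1)] zero_closed] emb_zero by simp
    qed
    hence "b = \<zero>" using ann_ess'[OF K b(1)] by blast
    thus False using a(2) b(2) emb_zero by simp
  qed
qed

lemma qs_main: "lmono S Q (psi A S emb) \<and> (\<forall>x\<in>C. psi A S emb (emb x) = ph x)"
proof (intro conjI ballI)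
  show "lmono S Q (psi A S emb)"
    unfolding lmono_def lhom_def Q_simps
    using psi_in psi_add psi_smul psi_br psi_inj by (auto simp: inj_on_def)
  fix x assume "x \<in> C" thus "psi A S emb (emb x) = ph x" by (rule psi_emb)
qed

end

theorem proposition4p6:
  fixes L :: "('f::field, 'a) lalg"
  assumes "leibniz L" and "semiprime L"
  shows "leibniz (Qalg L) \<and> semiprime (Qalg L) \<and>
         alg_of_quotients (Qalg L) (phi L ` lcar L) \<and>
         (\<forall>(S :: ('f, 's) lalg) (emb :: 'a \<Rightarrow> 's).
            lmono L S emb \<and> alg_of_quotients S (emb ` lcar L) \<longrightarrow>
              lmono S (Qalg L) (psi L S emb) \<and>
              (\<forall>x\<in>lcar L. psi L S emb (emb x) = phi L x))"
proof -
  interpret sp L by unfold_locales (rule assms)+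
  show ?thesis
  proof (intro conjI allI impI)
    show "leibniz (Qalg L)" by (rule Q_leibniz)
    show "semiprime (Qalg L)" by (rule Q_semiprime)
    show "alg_of_quotients (Qalg L) (phi L ` lcar L)" by (rule Q_aoq)
  next
    fix S :: "('f, 's) lalg" and emb :: "'a \<Rightarrow> 's"
    assume h: "lmono L S emb \<and> alg_of_quotients S (emb ` lcar L)"
    interpret qs L S emb by unfold_locales (use assms h in blast)+
    show "lmono S (Qalg L) (psi L S emb)" using qs_main by blast
    show "\<forall>x\<in>lcar L. psi L S emb (emb x) = phi L x" using qs_main by blast
  qed
qed

end
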